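(* Let $\Omega$ be strictly convex. Let $h_0$ be continuous on $\bar\Omega\times\mathbb{R}^3\setminus\gamma_0$, and let $q(t,x,v)$ be continuous in the interior of $[0,\infty)\times\Omega\times\mathbb{R}^3$ with $\sup_{[0,\infty)\times\Omega\times\mathbb{R}^3}|q(t,x,v)/\nu(v)|<\infty$. Assume the compatibility condition $h_0(x,v)=h_0(x,-v)$ on $\gamma_-$. Then the solution $h$ of $\partial_th+v\cdot\nabla_xh+\nu h=q$, $h(0,x,v)=h_0$, with the bounce-back condition $h(t,x,v)=h(t,x,-v)$ for $x\in\partial\Omega$, is continuous on $[0,\infty)\times\{\bar\Omega\times\mathbb{R}^3\setminus\gamma_0\}$.
   Context: $\Omega=\{x\in\mathbb{R}^3:\xi(x)<0\}$ is connected and bounded, $\xi$ smooth with $\nabla\xi\neq0$ on $\{\xi=0\}$; $n(x)=\nabla\xi(x)/|\nabla\xi(x)|$. Strictly convex: there is $c_\xi>0$ with $\partial_{ij}\xi(x)\zeta^i\zeta^j\ge c_\xi|\zeta|^2$ for $\xi(x)\le0$, $\zeta\in\mathbb{R}^3$. $\gamma_-=\{(x,v)\in\partial\Omega\times\mathbb{R}^3:n(x)\cdot v<0\}$, $\gamma_0=\{(x,v)\in\partial\Omega\times\mathbb{R}^3:n(x)\cdot v=0\}$. $\nu(v)=\int|v-u|^\gamma e^{-|u|^2/2}q_0(\theta)\,du\,d\omega$ with $0\le\gamma\le1$, $0\le q_0(\theta)\le C|\cos\theta|$, $\cos\theta=(u-v)\cdot\omega/|u-v|$. *)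

theory Defs
  imports "HOL-Analysis.Analysis"
begin

text \<open>Iterated directional (Frechet) derivatives of a scalar function on R^3:
  dd f [d1,...,dk] is the derivative in direction d1 of ... of the derivative in direction dk.\<close>
fun dd :: "(real^3 \<Rightarrow> real) \<Rightarrow> (real^3) list \<Rightarrow> real^3 \<Rightarrow> real" where
  "dd f [] = f"
| "dd f (d # ds) = (\<lambda>x. frechet_derivative (dd f ds) (at x) d)"

definition smooth3 :: "(real^3 \<Rightarrow> real) \<Rightarrow> bool" where
  "smooth3 f \<longleftrightarrow> (\<forall>ds x. dd f ds differentiable (at x))"

definition grad :: "(real^3 \<Rightarrow> real) \<Rightarrow> real^3 \<Rightarrow> real^3" where
  "grad \<xi> x = (\<chi> i. frechet_derivative \<xi> (at x) (axis i 1))"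

definition normal :: "(real^3 \<Rightarrow> real) \<Rightarrow> real^3 \<Rightarrow> real^3" where
  "normal \<xi> x = (1 / norm (grad \<xi> x)) *\<^sub>R grad \<xi> x"

definition dom :: "(real^3 \<Rightarrow> real) \<Rightarrow> (real^3) set" where
  "dom \<xi> = {x. \<xi> x < 0}"

definition gamma_minus :: "(real^3 \<Rightarrow> real) \<Rightarrow> ((real^3) \<times> (real^3)) set" where
  "gamma_minus \<xi> = {(x, v). x \<in> frontier (dom \<xi>) \<and> normal \<xi> x \<bullet> v < 0}"

definition gamma_zero :: "(real^3 \<Rightarrow> real) \<Rightarrow> ((real^3) \<times> (real^3)) set" where
  "gamma_zero \<xi> = {(x, v). x \<in> frontier (dom \<xi>) \<and> normal \<xi> x \<bullet> v = 0}"

text \<open>Spherical coordinates for omega in S^2; surface measure is sin(phi) dphi dpsi.\<close>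
definition sph :: "real \<Rightarrow> real \<Rightarrow> real^3" where
  "sph \<phi> \<psi> = vector [sin \<phi> * cos \<psi>, sin \<phi> * sin \<psi>, cos \<phi>]"

definition nu :: "real \<Rightarrow> (real \<Rightarrow> real) \<Rightarrow> real^3 \<Rightarrow> real" where
  "nu gam q0 v =
     (LINT u|lborel. set_lebesgue_integral lborel {0..pi} (\<lambda>\<phi>.
        set_lebesgue_integral lborel {0..2*pi} (\<lambda>\<psi>.
        sin \<phi> * (norm (v - u) powr gam * exp (- (norm u)\<^sup>2 / 2)
                 * q0 (arccos (((u - v) \<bullet> sph \<phi> \<psi>) / norm (u - v)))))))"

text \<open>Mild solution (Duhamel formula along characteristics) of
  d_t h + v.grad_x h + nu h = q, h(0) = h0, bounce-back h(t,x,v) = h(t,x,-v) on the boundary.\<close>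
definition bb_solution ::
  "(real^3 \<Rightarrow> real) \<Rightarrow> real \<Rightarrow> (real \<Rightarrow> real) \<Rightarrow> (real^3 \<Rightarrow> real^3 \<Rightarrow> real)
   \<Rightarrow> (real \<Rightarrow> real^3 \<Rightarrow> real^3 \<Rightarrow> real) \<Rightarrow> (real \<Rightarrow> real^3 \<Rightarrow> real^3 \<Rightarrow> real) \<Rightarrow> bool" where
  "bb_solution \<xi> gam q0 h0 q h \<longleftrightarrow>
     (\<forall>x v. x \<in> closure (dom \<xi>) \<longrightarrow> h 0 x v = h0 x v) \<and>
     (\<forall>t x v. t > 0 \<longrightarrow> x \<in> frontier (dom \<xi>) \<longrightarrow> h t x v = h t x (- v)) \<and>
     (\<forall>t \<tau> x v. 0 \<le> t \<longrightarrow> 0 \<le> \<tau> \<longrightarrow> (\<forall>s\<in>{0..\<tau>}. x + s *\<^sub>R v \<in> closure (dom \<xi>)) \<longrightarrow>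
        h (t + \<tau>) (x + \<tau> *\<^sub>R v) v =
          exp (- nu gam q0 v * \<tau>) * h t x v
          + integral {0..\<tau>} (\<lambda>s. exp (- nu gam q0 v * (\<tau> - s)) * q (t + s) (x + s *\<^sub>R v) v))"

end

theory Submission
  imports Defs "HOL-Probability.Distributions"
begin


lemma gauss1: "integrable lborel (\<lambda>x::real. exp (- x\<^sup>2 / 8))"
proof -
  have "integrable lborel (\<lambda>x. sqrt (2*pi*2\<^sup>2) * normal_density 0 2 x)"
    by (intro integrable_mult_right) simp
  moreover have "(\<lambda>x. sqrt (2*pi*2\<^sup>2) * normal_density 0 2 x) = (\<lambda>x::real. exp (- x\<^sup>2 / 8))"
    by (auto simp: normal_density_def)
  ultimately show ?thesis by metis
qed

lemma gauss3: "integrable lborel (\<lambda>w::real^3. exp (- (norm w)\<^sup>2 / 8))"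
proof -
  interpret product_sigma_finite "\<lambda>_. lborel" by standard
  let ?g = "\<lambda>f. \<Sum>b\<in>(Basis::(real^3) set). f b *\<^sub>R b"
  have m: "?g \<in> measurable (\<Pi>\<^sub>M b\<in>Basis. lborel) borel" by measurable
  have pi: "integrable (\<Pi>\<^sub>M b\<in>(Basis::(real^3) set). lborel) (\<lambda>f. \<Prod>b\<in>Basis. exp (- (f b)\<^sup>2 / (8::real)))"
    by (rule product_integrable_prod) (use gauss1 in simp_all)
  have eq: "exp (- (norm (?g f))\<^sup>2 / 8) = (\<Prod>b\<in>Basis. exp (- (f b)\<^sup>2 / 8))" for f
  proof -
    have "(norm (?g f))\<^sup>2 = (\<Sum>b\<in>Basis. (?g f \<bullet> b)\<^sup>2)"
      unfolding power2_norm_eq_inner by (subst euclidean_inner) (simp only: power2_eq_square)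
    also have "\<dots> = (\<Sum>b\<in>Basis. (f b)\<^sup>2)"
      by (intro sum.cong refl) (simp add: inner_sum_left_Basis)
    finally have "(norm (?g f))\<^sup>2 = (\<Sum>b\<in>Basis. (f b)\<^sup>2)" .
    then show ?thesis
      by (simp add: exp_sum[symmetric] sum_divide_distrib[symmetric] sum_negf)
  qed
  have "integrable (distr (\<Pi>\<^sub>M b\<in>Basis. lborel) borel ?g) (\<lambda>w::real^3. exp (- (norm w)\<^sup>2 / 8))"
    by (subst integrable_distr_eq[OF m]) (simp_all only: eq pi, measurable)
  then show ?thesis by (simp add: lborel_eq[symmetric])
qed


lemma sli_bound:
  fixes f :: "real \<Rightarrow> real"
  assumes "\<And>x. x \<in> {a..b} \<Longrightarrow> \<bar>f x\<bar> \<le> B" "a \<le> b"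
  shows "\<bar>set_lebesgue_integral lborel {a..b} f\<bar> \<le> B * (b - a)"
proof -
  have "\<bar>set_lebesgue_integral lborel {a..b} f\<bar> \<le> (LINT x|lborel. norm (indicator {a..b} x *\<^sub>R f x))"
    unfolding set_lebesgue_integral_def using integral_norm_bound by (metis real_norm_def)
  also have "\<dots> \<le> (LINT x|lborel. B * indicator {a..b} x)"
  proof (rule integral_mono')
    show "integrable lborel (\<lambda>x. B * indicator {a..b} x)"
      by (intro integrable_mult_right integrable_real_indicator) (use assms(2) in \<open>auto simp: emeasure_lborel_Icc\<close>)
    fix x show "norm (indicator {a..b} x *\<^sub>R f x) \<le> B * indicator {a..b} x"
      using assms(1)[of x] by (auto simp: indicator_def)
    show "0 \<le> B * indicator {a..b} x"
      using assms(1)[of a] assms(2) by (auto simp: indicator_def)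
  qed
  also have "\<dots> = B * (b - a)" using assms(2) by simp
  finally show ?thesis .
qed

definition KK :: "(real \<Rightarrow> real) \<Rightarrow> real^3 \<Rightarrow> real" where
  "KK q0 w = set_lebesgue_integral lborel {0..pi} (\<lambda>\<phi>.
        set_lebesgue_integral lborel {0..2*pi} (\<lambda>\<psi>.
        sin \<phi> * q0 (arccos ((w \<bullet> sph \<phi> \<psi>) / norm w))))"

lemma sph_eq: "sph a b = (sin a * cos b) *\<^sub>R axis 1 1 + (sin a * sin b) *\<^sub>R axis 2 1 + cos a *\<^sub>R axis 3 1"
  by (simp add: sph_def vec_eq_iff forall_3 axis_def)

lemma sph_cont: "continuous_on UNIV (\<lambda>(a,b). sph a b)"
  unfolding sph_eq case_prod_unfold by (intro continuous_intros)

lemma norm_sph: "norm (sph a b) = 1"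
proof -
  have 1: "(sin a * cos b)^2 + (sin a * sin b)^2 + (cos a)^2 = 1"
  proof -
    have "(sin a * cos b)^2 + (sin a * sin b)^2 = (sin a)^2 * ((cos b)^2 + (sin b)^2)"
      by (simp only: power_mult_distrib distrib_left)
    also have "\<dots> = (sin a)^2" by simp
    finally show ?thesis by simp
  qed
  have 2: "(norm (sph a b))^2 = (sin a * cos b)^2 + (sin a * sin b)^2 + (cos a)^2"
    unfolding power2_norm_eq_inner unfolding inner_vec_def sum_3 sph_def vector_3 inner_real_def power2_eq_square
    by (simp only: add.assoc)
  from 1 2 show ?thesis using norm_ge_zero[of "sph a b"] by (auto simp add: power2_eq_1_iff)
qed

definition acl :: "real \<Rightarrow> real" where "acl x = arccos (max (-1) (min 1 x))"

lemma acl_cont: "continuous_on UNIV acl"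
  unfolding acl_def by (intro continuous_intros) auto

lemma cs_bound: "\<bar>(w \<bullet> sph a b) / norm w\<bar> \<le> 1"
proof (cases "w = 0")
  case False
  then have n: "norm w > 0" by simp
  have "\<bar>w \<bullet> sph a b\<bar> \<le> norm w * norm (sph a b)" by (rule Cauchy_Schwarz_ineq2)
  then have "\<bar>w \<bullet> sph a b\<bar> \<le> norm w" by (simp only: norm_sph mult_1_right)
  then show ?thesis using n by (simp only: abs_divide abs_norm_cancel divide_le_eq_1_pos)
qed simp

lemma arccos_acl: "arccos ((w \<bullet> sph a b) / norm w) = acl ((w \<bullet> sph a b) / norm w)"
proof -
  have "-1 \<le> (w \<bullet> sph a b) / norm w" "(w \<bullet> sph a b) / norm w \<le> 1" using abs_le_D1[OF cs_bound[of w a b]] abs_le_D2[OF cs_bound[of w a b]] by linarith+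
  then show ?thesis unfolding acl_def by (simp add: max_def min_def)
qed

definition spf :: "real \<times> real \<Rightarrow> real^3" where "spf p = sph (fst p) (snd p)"

lemma spf_meas[measurable]: "spf \<in> borel_measurable (lborel \<Otimes>\<^sub>M lborel)"
proof -
  have "spf \<in> borel_measurable borel"
    using sph_cont unfolding spf_def case_prod_unfold by (intro borel_measurable_continuous_onI) simp
  then show ?thesis by (simp add: borel_prod[symmetric] measurable_lborel1 cong: measurable_cong_sets)
qed

lemma acl_meas[measurable]: "acl \<in> borel_measurable borel"
  using acl_cont by (intro borel_measurable_continuous_onI) simp

type_synonym T3 = "(((real^3) \<times> real) \<times> real)"

lemma A_meas: "(\<lambda>x::T3. (fst (fst x) \<bullet> spf (snd (fst x), snd x)) / norm (fst (fst x)))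
   \<in> borel_measurable ((borel \<Otimes>\<^sub>M lborel) \<Otimes>\<^sub>M lborel)"
proof -
  have 1: "(\<lambda>x::T3. spf (snd (fst x), snd x)) \<in> borel_measurable ((borel \<Otimes>\<^sub>M lborel) \<Otimes>\<^sub>M lborel)"
    by (rule measurable_compose[OF _ spf_meas]) measurable
  have 2: "(\<lambda>x::T3. fst (fst x)) \<in> borel_measurable ((borel \<Otimes>\<^sub>M lborel) \<Otimes>\<^sub>M lborel)"
    by measurable
  show ?thesis
    by (intro borel_measurable_divide borel_measurable_inner 1 2 measurable_compose[OF 2 borel_measurable_norm])
qed

lemma KK_meas:
  assumes q0m: "q0 \<in> borel_measurable borel"
  shows "KK q0 \<in> borel_measurable borel"
proof -
  have G: "(\<lambda>x::T3. indicator {0..2*pi} (snd x) *\<^sub>R (sin (snd (fst x)) * q0 (acl ((fst (fst x) \<bullet> spf (snd (fst x), snd x)) / norm (fst (fst x))))))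
     \<in> borel_measurable ((borel \<Otimes>\<^sub>M lborel) \<Otimes>\<^sub>M lborel)"
  proof -
    have 1: "(\<lambda>x::T3. q0 (acl ((fst (fst x) \<bullet> spf (snd (fst x), snd x)) / norm (fst (fst x)))))
      \<in> borel_measurable ((borel \<Otimes>\<^sub>M lborel) \<Otimes>\<^sub>M lborel)"
      by (rule measurable_compose[OF measurable_compose[OF A_meas acl_meas] q0m])
    have 2: "(\<lambda>x::T3. indicator {0..2*pi} (snd x) :: real) \<in> borel_measurable ((borel \<Otimes>\<^sub>M lborel) \<Otimes>\<^sub>M lborel)"
      by (rule measurable_compose[OF measurable_snd borel_measurable_indicator]) simp
    have 3: "(\<lambda>x::T3. sin (snd (fst x))) \<in> borel_measurable ((borel \<Otimes>\<^sub>M lborel) \<Otimes>\<^sub>M lborel)"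
      by measurable
    show ?thesis by (rule borel_measurable_scaleR[OF 2 borel_measurable_times[OF 3 1]])
  qed
  define F2 where "F2 = (\<lambda>p::(real^3)\<times>real. LINT \<psi>|lborel. indicator {0..2*pi} \<psi> *\<^sub>R (sin (snd p) * q0 (acl ((fst p \<bullet> spf (snd p, \<psi>)) / norm (fst p)))))"
  have F2m: "F2 \<in> borel_measurable (borel \<Otimes>\<^sub>M lborel)"
    unfolding F2_def
    by (rule lborel.borel_measurable_lebesgue_integral) (unfold case_prod_unfold, rule G)
  have H: "(\<lambda>p::(real^3)\<times>real. indicator {0..pi} (snd p) *\<^sub>R F2 p) \<in> borel_measurable (borel \<Otimes>\<^sub>M lborel)"
  proof (rule borel_measurable_scaleR[OF _ F2m])
    show "(\<lambda>p::(real^3)\<times>real. indicator {0..pi} (snd p) :: real) \<in> borel_measurable (borel \<Otimes>\<^sub>M lborel)"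
      by (rule measurable_compose[OF measurable_snd borel_measurable_indicator]) simp
  qed
  have "(\<lambda>w. LINT \<phi>|lborel. indicator {0..pi} \<phi> *\<^sub>R F2 (w, \<phi>)) \<in> borel_measurable borel"
    by (rule lborel.borel_measurable_lebesgue_integral) (unfold case_prod_unfold prod.collapse, rule H)
  moreover have "KK q0 = (\<lambda>w. LINT \<phi>|lborel. indicator {0..pi} \<phi> *\<^sub>R F2 (w, \<phi>))"
    unfolding KK_def set_lebesgue_integral_def F2_def arccos_acl spf_def by simp
  ultimately show ?thesis by metis
qed


lemma KK_bound:
  assumes "\<And>t. \<bar>q0 t\<bar> \<le> Cq"
  shows "\<bar>KK q0 w\<bar> \<le> Cq * (2*pi) * pi"
proof -
  have inner: "\<bar>set_lebesgue_integral lborel {0..2*pi} (\<lambda>\<psi>. sin \<phi> * q0 (arccos ((w \<bullet> sph \<phi> \<psi>) / norm w)))\<bar> \<le> Cq * (2*pi)" for \<phi>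
  proof -
    have "\<bar>set_lebesgue_integral lborel {0..2*pi} (\<lambda>\<psi>. sin \<phi> * q0 (arccos ((w \<bullet> sph \<phi> \<psi>) / norm w)))\<bar> \<le> Cq * (2*pi - 0)"
    proof (rule sli_bound)
      fix \<psi> :: real
      have "\<bar>sin \<phi>\<bar> \<le> 1" by simp
      moreover have "\<bar>q0 (arccos ((w \<bullet> sph \<phi> \<psi>) / norm w))\<bar> \<le> Cq" by (rule assms)
      ultimately show "\<bar>sin \<phi> * q0 (arccos ((w \<bullet> sph \<phi> \<psi>) / norm w))\<bar> \<le> Cq"
        unfolding abs_mult using mult_mono[of "\<bar>sin \<phi>\<bar>" 1 "\<bar>q0 (arccos ((w \<bullet> sph \<phi> \<psi>) / norm w))\<bar>" Cq] by simp
    qed simp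
    then show ?thesis by simp
  qed
  have "\<bar>KK q0 w\<bar> \<le> (Cq * (2*pi)) * (pi - 0)"
    unfolding KK_def by (rule sli_bound) (use inner in auto)
  then show ?thesis by simp
qed

lemma nu_eq1:
  "nu gam q0 v = (LINT u|lborel. (norm (v - u) powr gam * exp (- (norm u)\<^sup>2 / 2)) * KK q0 (u - v))"
  unfolding nu_def KK_def
  by (simp add: mult.left_commute[of "sin _"])


lemma powr_le_1p: "0 \<le> r \<Longrightarrow> 0 \<le> g \<Longrightarrow> g \<le> 1 \<Longrightarrow> r powr g \<le> 1 + r" for r g :: real
proof (cases "r \<le> 1")
  case True
  assume "0 \<le> r" "0 \<le> g" "g \<le> 1"
  have "r powr g \<le> 1"
  proof (cases "r = 0")
    case False
    have "r powr g \<le> r powr 0" by (rule powr_mono') (use True \<open>0 \<le> r\<close> \<open>0 \<le> g\<close> in auto)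
    then show ?thesis using False by simp
  qed simp
  then show ?thesis using \<open>0 \<le> r\<close> by simp
next
  case False
  assume "0 \<le> r" "0 \<le> g" "g \<le> 1"
  then have "r powr g \<le> r powr 1" using False by (intro powr_mono) auto
  then show ?thesis using False by simp
qed

lemma gauss_aux: "(1 + r) * exp (- r\<^sup>2 / 4) \<le> 4 * exp (- r\<^sup>2 / 8)" for r :: real
proof -
  have "0 \<le> (r - 1)\<^sup>2" by simp
  then have "0 \<le> r\<^sup>2 - 2 * r + 1" by (simp add: power2_diff)
  moreover have "4 * (1 + r\<^sup>2 / 8) = 4 + r\<^sup>2 / 2" by simp
  ultimately have "1 + r \<le> 4 * (1 + r\<^sup>2 / 8)" by linarith
  also have "\<dots> \<le> 4 * exp (r\<^sup>2 / 8)" using exp_ge_add_one_self[of "r\<^sup>2/8"] by (intro mult_left_mono) auto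
  finally have "1 + r \<le> 4 * exp (r\<^sup>2 / 8)" .
  then have "(1 + r) * exp (- r\<^sup>2 / 4) \<le> 4 * exp (r\<^sup>2 / 8) * exp (- r\<^sup>2 / 4)"
    by (intro mult_right_mono) auto
  also have "\<dots> = 4 * exp (- r\<^sup>2 / 8)" by (simp add: exp_add[symmetric] mult.assoc)
  finally show ?thesis .
qed

lemma nu_bound_pt:
  fixes x w :: "real^3"
  assumes "0 \<le> gam" "gam \<le> 1" "norm x \<le> R" "\<bar>K\<bar> \<le> Kb"
  shows "norm ((norm w powr gam * exp (- (norm (x + w))\<^sup>2 / 2)) * K) \<le> 4 * Kb * exp (R\<^sup>2 / 2) * exp (- (norm w)\<^sup>2 / 8)"
proof -
  have a: "norm w powr gam \<le> 1 + norm w" using assms by (intro powr_le_1p) auto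
  have t: "norm w \<le> norm (x + w) + R" using norm_triangle_ineq4[of "x + w" x] assms(3) by simp
  have "(norm w)\<^sup>2 \<le> 2 * (norm (x + w))\<^sup>2 + 2 * R\<^sup>2"
  proof -
    have "(norm w)\<^sup>2 \<le> (norm (x + w) + R)\<^sup>2" using t by (intro power_mono) auto
    also have "\<dots> \<le> 2 * (norm (x + w))\<^sup>2 + 2 * R\<^sup>2"
    proof -
      have "0 \<le> (norm (x + w) - R)\<^sup>2" by simp
      then show ?thesis unfolding power2_diff power2_sum by linarith
    qed
    finally show ?thesis .
  qed
  then have e: "exp (- (norm (x + w))\<^sup>2 / 2) \<le> exp (R\<^sup>2 / 2) * exp (- (norm w)\<^sup>2 / 4)"
    unfolding exp_add[symmetric] by simp
  have Kb: "0 \<le> Kb" using assms(4) by linarith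
  have "norm ((norm w powr gam * exp (- (norm (x + w))\<^sup>2 / 2)) * K)
      = norm w powr gam * exp (- (norm (x + w))\<^sup>2 / 2) * \<bar>K\<bar>"
    by (simp add: abs_mult)
  also have "\<dots> \<le> (1 + norm w) * (exp (R\<^sup>2 / 2) * exp (- (norm w)\<^sup>2 / 4)) * Kb"
    using a e assms(4) by (intro mult_mono) auto
  also have "\<dots> = Kb * exp (R\<^sup>2 / 2) * ((1 + norm w) * exp (- (norm w)\<^sup>2 / 4))" by simp
  also have "\<dots> \<le> Kb * exp (R\<^sup>2 / 2) * (4 * exp (- (norm w)\<^sup>2 / 8))"
    using Kb by (intro mult_left_mono gauss_aux) auto
  finally show ?thesis by simp
qed

lemma nu_eq2:
  assumes [measurable]: "q0 \<in> borel_measurable borel"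
  shows "nu gam q0 v = (LINT w|lborel. (norm w powr gam * exp (- (norm (v + w))\<^sup>2 / 2)) * KK q0 w)"
proof -
  have KKm[measurable]: "KK q0 \<in> borel_measurable borel" by (rule KK_meas) simp
  let ?f = "\<lambda>u::real^3. (norm (v - u) powr gam * exp (- (norm u)\<^sup>2 / 2)) * KK q0 (u - v)"
  have fm: "?f \<in> borel_measurable borel" by measurable
  have "nu gam q0 v = integral\<^sup>L lborel ?f" by (rule nu_eq1)
  also have "\<dots> = integral\<^sup>L (distr lborel borel ((+) v)) ?f" by (simp add: lborel_distr_plus)
  also have "\<dots> = (LINT w|lborel. ?f (v + w))"
    by (rule integral_distr) (simp_all add: fm)
  also have "\<dots> = (LINT w|lborel. (norm w powr gam * exp (- (norm (v + w))\<^sup>2 / 2)) * KK q0 w)"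
    by (simp add: norm_minus_commute)
  finally show ?thesis .
qed


lemma nu_cont:
  assumes q0m: "q0 \<in> borel_measurable borel"
    and qb: "\<exists>C. \<forall>\<theta>. 0 \<le> q0 \<theta> \<and> q0 \<theta> \<le> C * \<bar>cos \<theta>\<bar>"
    and g0: "0 \<le> gam" and g1: "gam \<le> 1"
  shows "continuous_on UNIV (nu gam q0)"
proof -
  obtain C where C: "\<And>\<theta>. 0 \<le> q0 \<theta> \<and> q0 \<theta> \<le> C * \<bar>cos \<theta>\<bar>" using qb by blast
  have C0: "0 \<le> C" using C[of 0] by simp
  have qC: "\<bar>q0 t\<bar> \<le> C" for t
  proof -
    have "q0 t \<le> C * \<bar>cos t\<bar>" using C by blast
    also have "\<dots> \<le> C * 1" using C0 by (intro mult_left_mono) auto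
    finally show ?thesis using C[of t] by simp
  qed
  define Kb where "Kb = C * (2*pi) * pi"
  have KKb: "\<bar>KK q0 w\<bar> \<le> Kb" for w unfolding Kb_def by (rule KK_bound[OF qC])
  have KKm[measurable]: "KK q0 \<in> borel_measurable borel" by (rule KK_meas[OF q0m])
  define F where "F = (\<lambda>(x::real^3) (w::real^3). (norm w powr gam * exp (- (norm (x + w))\<^sup>2 / 2)) * KK q0 w)"
  have Fm[measurable]: "F x \<in> borel_measurable lborel" for x unfolding F_def by measurable
  have nuF: "nu gam q0 x = integral\<^sup>L lborel (F x)" for x unfolding F_def nu_eq2[OF q0m] by simp
  have "continuous (at v) (nu gam q0)" for v
  proof (rule continuous_at_sequentiallyI)
    fix u assume u: "u \<longlonglongrightarrow> v"
    then have "Bseq u" using convergent_imp_Bseq convergentI by blast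
    then obtain R where R: "0 < R" "\<And>n. norm (u n) \<le> R" by (auto elim: BseqE)
    show "(\<lambda>n. nu gam q0 (u n)) \<longlonglongrightarrow> nu gam q0 v"
      unfolding nuF
    proof (rule integral_dominated_convergence[where w="\<lambda>w. 4 * Kb * exp (R\<^sup>2 / 2) * exp (- (norm w)\<^sup>2 / 8)"])
      show "integrable lborel (\<lambda>w::real^3. 4 * Kb * exp (R\<^sup>2 / 2) * exp (- (norm w)\<^sup>2 / 8))"
        by (intro integrable_mult_right gauss3)
      show "AE w in lborel. (\<lambda>i. F (u i) w) \<longlonglongrightarrow> F v w"
        unfolding F_def by (intro AE_I2 tendsto_intros u) auto
      show "AE w in lborel. norm (F (u i) w) \<le> 4 * Kb * exp (R\<^sup>2 / 2) * exp (- (norm w)\<^sup>2 / 8)" for i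
        unfolding F_def using nu_bound_pt[OF g0 g1 R(2) KKb] by (intro AE_I2) blast
    qed simp_all
  qed
  then show ?thesis by (intro continuous_at_imp_continuous_on) auto
qed


locale geo =
  fixes \<xi> :: "real^3 \<Rightarrow> real" and c :: real
  assumes smooth: "smooth3 \<xi>"
    and bnd: "bounded (dom \<xi>)"
    and gnz: "\<forall>x. \<xi> x = 0 \<longrightarrow> grad \<xi> x \<noteq> 0"
    and cpos: "c > 0"
    and cvx: "\<forall>x \<zeta>. \<xi> x \<le> 0 \<longrightarrow> dd \<xi> [\<zeta>, \<zeta>] x \<ge> c * (norm \<zeta>)\<^sup>2"
begin

definition Dx :: "real^3 \<Rightarrow> real^3 \<Rightarrow> real" where "Dx x = frechet_derivative \<xi> (at x)"

abbreviation "\<Omega> \<equiv> dom \<xi>"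
abbreviation "DD \<equiv> closure (dom \<xi>)"

lemma xi_deriv: "(\<xi> has_derivative Dx x) (at x)"
proof -
  have "dd \<xi> [] differentiable (at x)" using smooth unfolding smooth3_def by blast
  then show ?thesis unfolding Dx_def by (simp add: frechet_derivative_works)
qed

lemma xi_cont: "continuous_on S \<xi>"
  using xi_deriv by (meson continuous_at_imp_continuous_on differentiableI differentiable_imp_continuous_within)

lemma Dx_linear: "linear (Dx x)" using xi_deriv by (rule has_derivative_linear)

lemma Dx_minus: "Dx x (- v) = - Dx x v" using Dx_linear by (rule linear_neg)

lemma dd1: "dd \<xi> [v] = (\<lambda>x. Dx x v)" by (simp add: Dx_def fun_eq_iff)

lemma D1_deriv: "((\<lambda>x. Dx x v) has_derivative frechet_derivative (dd \<xi> [v]) (at x)) (at x)"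
proof -
  have "dd \<xi> [v] differentiable (at x)" using smooth unfolding smooth3_def by blast
  then show ?thesis by (simp add: frechet_derivative_works[symmetric] dd1[symmetric])
qed

lemma dd2: "dd \<xi> [v, v] x = frechet_derivative (dd \<xi> [v]) (at x) v" by simp

lemma D1_cont: "continuous_on S (\<lambda>x. Dx x v)"
  using D1_deriv by (meson continuous_at_imp_continuous_on differentiableI differentiable_imp_continuous_within)

lemma grad_eq: "grad \<xi> x = (\<chi> i. Dx x (axis i 1))" unfolding grad_def Dx_def by simp

lemma Dx_grad: "Dx x v = grad \<xi> x \<bullet> v"
proof -
  have "Dx x v = Dx x (\<Sum>i\<in>UNIV. (v$i) *s axis i 1)" by (simp add: basis_expansion)
  also have "\<dots> = (\<Sum>i\<in>UNIV. v$i * Dx x (axis i 1))"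
    using Dx_linear by (simp add: linear_sum linear_scale scalar_mult_eq_scaleR)
  also have "\<dots> = grad \<xi> x \<bullet> v" by (simp add: grad_eq inner_vec_def mult.commute)
  finally show ?thesis .
qed

lemma grad_cont: "continuous_on S (grad \<xi>)"
  unfolding grad_eq by (intro continuous_on_vec_lambda D1_cont)

lemma Dx_cont2: "continuous_on S (\<lambda>p. Dx (fst p) (snd p))"
  unfolding Dx_grad
  by (intro continuous_intros continuous_on_compose2[OF grad_cont[of UNIV]]) auto

lemma open_Om: "open \<Omega>"
  unfolding dom_def by (rule open_Collect_less) (auto intro: xi_cont continuous_intros)

lemma DD_le: "x \<in> DD \<Longrightarrow> \<xi> x \<le> 0"
proof -
  have "closed {x. \<xi> x \<le> 0}" by (rule closed_Collect_le) (auto intro: xi_cont continuous_intros)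
  moreover have "\<Omega> \<subseteq> {x. \<xi> x \<le> 0}" by (auto simp: dom_def)
  ultimately have "DD \<subseteq> {x. \<xi> x \<le> 0}" by (rule closure_minimal[rotated])
  then show "x \<in> DD \<Longrightarrow> \<xi> x \<le> 0" by auto
qed

lemma front_eq: "frontier \<Omega> = DD - \<Omega>"
  using open_Om by (simp add: frontier_def interior_open)

lemma front_zero: "x \<in> frontier \<Omega> \<Longrightarrow> \<xi> x = 0"
proof -
  assume "x \<in> frontier \<Omega>"
  then have "x \<in> DD" "x \<notin> \<Omega>" unfolding front_eq by auto
  then show ?thesis using DD_le[of x] unfolding dom_def by auto
qed

lemma Om_sub: "\<Omega> \<subseteq> DD" by (rule closure_subset)

lemma bnd_DD: "bounded DD" using bnd by (rule bounded_closure)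

lemma normal_sign: "x \<in> frontier \<Omega> \<Longrightarrow> (normal \<xi> x \<bullet> v < 0 \<longleftrightarrow> Dx x v < 0) \<and> (normal \<xi> x \<bullet> v = 0 \<longleftrightarrow> Dx x v = 0)"
proof -
  assume "x \<in> frontier \<Omega>"
  then have "grad \<xi> x \<noteq> 0" using gnz front_zero by blast
  then have n: "norm (grad \<xi> x) > 0" by simp
  have "normal \<xi> x \<bullet> v = Dx x v / norm (grad \<xi> x)" unfolding normal_def Dx_grad by simp
  then show ?thesis using n by (simp add: divide_less_0_iff)
qed

lemma line_deriv: "((\<lambda>s. \<xi> (y + s *\<^sub>R v)) has_real_derivative Dx (y + s *\<^sub>R v) v) (at s)"
proof -
  have "((\<lambda>s. y + s *\<^sub>R v) has_derivative (\<lambda>h. h *\<^sub>R v)) (at s)"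
    by (auto intro!: derivative_eq_intros)
  from has_derivative_compose[OF this xi_deriv]
  have "((\<lambda>s. \<xi> (y + s *\<^sub>R v)) has_derivative (\<lambda>h. Dx (y + s *\<^sub>R v) (h *\<^sub>R v))) (at s)" .
  moreover have "(\<lambda>h. Dx (y + s *\<^sub>R v) (h *\<^sub>R v)) = (*) (Dx (y + s *\<^sub>R v) v)"
    using Dx_linear by (simp add: linear_scale fun_eq_iff mult.commute)
  ultimately show ?thesis unfolding has_field_derivative_def by simp
qed

lemma line_deriv2: "((\<lambda>s. Dx (y + s *\<^sub>R v) v) has_real_derivative dd \<xi> [v, v] (y + s *\<^sub>R v)) (at s)"
proof -
  have "((\<lambda>s. y + s *\<^sub>R v) has_derivative (\<lambda>h. h *\<^sub>R v)) (at s)"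
    by (auto intro!: derivative_eq_intros)
  from has_derivative_compose[OF this D1_deriv]
  have "((\<lambda>s. Dx (y + s *\<^sub>R v) v) has_derivative (\<lambda>h. frechet_derivative (dd \<xi> [v]) (at (y + s *\<^sub>R v)) (h *\<^sub>R v))) (at s)" .
  moreover have "linear (frechet_derivative (dd \<xi> [v]) (at (y + s *\<^sub>R v)))"
    using D1_deriv by (rule has_derivative_linear)
  then have "(\<lambda>h. frechet_derivative (dd \<xi> [v]) (at (y + s *\<^sub>R v)) (h *\<^sub>R v)) = (*) (dd \<xi> [v, v] (y + s *\<^sub>R v))"
    by (simp add: linear_scale fun_eq_iff mult.commute del: dd.simps) (simp add: dd1)
  ultimately show ?thesis unfolding has_field_derivative_def by simp
qed

end

context geo begin

lemma trans_lem:
  assumes y0: "\<xi> y = 0" and v: "v \<noteq> 0" and tau: "\<tau> > 0" and seg: "\<forall>s\<in>{0..\<tau>}. y + s *\<^sub>R v \<in> DD"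
  shows "Dx y v < 0"
proof (rule ccontr)
  assume "\<not> Dx y v < 0"
  then have g10: "Dx (y + 0 *\<^sub>R v) v \<ge> 0" by simp
  have pos2: "dd \<xi> [v, v] (y + s *\<^sub>R v) > 0" if "s \<in> {0..\<tau>}" for s
  proof -
    have "\<xi> (y + s *\<^sub>R v) \<le> 0" using seg that DD_le by blast
    then have "dd \<xi> [v, v] (y + s *\<^sub>R v) \<ge> c * (norm v)\<^sup>2" using cvx by blast
    moreover have "c * (norm v)\<^sup>2 > 0" using cpos v by simp
    ultimately show ?thesis by linarith
  qed
  have g1pos: "Dx (y + s *\<^sub>R v) v > 0" if "0 < s" "s \<le> \<tau>" for s
  proof -
    have "\<exists>z. 0 < z \<and> z < s \<and> Dx (y + s *\<^sub>R v) v - Dx (y + 0 *\<^sub>R v) v = (s - 0) * dd \<xi> [v, v] (y + z *\<^sub>R v)"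
      by (rule MVT2[of 0 s "\<lambda>s. Dx (y + s *\<^sub>R v) v" "\<lambda>s. dd \<xi> [v, v] (y + s *\<^sub>R v)"]) (use that line_deriv2 in auto)
    then obtain z where z: "0 < z" "z < s"
      "Dx (y + s *\<^sub>R v) v - Dx (y + 0 *\<^sub>R v) v = (s - 0) * dd \<xi> [v, v] (y + z *\<^sub>R v)"
      by blast
    have "dd \<xi> [v, v] (y + z *\<^sub>R v) > 0" using pos2[of z] z that by auto
    then have "(s - 0) * dd \<xi> [v, v] (y + z *\<^sub>R v) > 0" using that by simp
    then show ?thesis using z(3) g10 by linarith
  qed
  obtain z where z: "0 < z" "z < \<tau>"
    "\<xi> (y + \<tau> *\<^sub>R v) - \<xi> (y + 0 *\<^sub>R v) = (\<tau> - 0) * Dx (y + z *\<^sub>R v) v"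
    using MVT2[of 0 \<tau> "\<lambda>s. \<xi> (y + s *\<^sub>R v)" "\<lambda>s. Dx (y + s *\<^sub>R v) v"] tau line_deriv by blast
  have "(\<tau> - 0) * Dx (y + z *\<^sub>R v) v > 0" using g1pos[of z] z tau by simp
  moreover have "\<xi> (y + \<tau> *\<^sub>R v) \<le> 0" using seg tau DD_le by auto
  ultimately show False using z(3) y0 by simp
qed

lemma intr_lem:
  assumes v: "v \<noteq> 0" and "a < s0" "s0 < b" and seg: "\<forall>s\<in>{a..b}. y + s *\<^sub>R v \<in> DD"
  shows "y + s0 *\<^sub>R v \<in> \<Omega>"
proof (rule ccontr)
  let ?p = "y + s0 *\<^sub>R v"
  assume "?p \<notin> \<Omega>"
  moreover have "?p \<in> DD" using seg assms by auto
  ultimately have "?p \<in> frontier \<Omega>" by (simp add: front_eq)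
  then have p0: "\<xi> ?p = 0" by (rule front_zero)
  have "Dx ?p v < 0"
  proof (rule trans_lem[OF p0 v])
    show "b - s0 > 0" using assms by simp
    show "\<forall>s\<in>{0..b - s0}. ?p + s *\<^sub>R v \<in> DD"
    proof
      fix s assume "s \<in> {0..b - s0}"
      then have h: "s0 + s \<in> {a..b}" using assms by auto
      show "?p + s *\<^sub>R v \<in> DD" using seg[rule_format, OF h] by (simp add: algebra_simps)
    qed
  qed
  moreover have "Dx ?p (- v) < 0"
  proof (rule trans_lem[OF p0])
    show "- v \<noteq> 0" using v by simp
    show "s0 - a > 0" using assms by simp
    show "\<forall>s\<in>{0..s0 - a}. ?p + s *\<^sub>R (- v) \<in> DD"
    proof
      fix s assume "s \<in> {0..s0 - a}"
      then have h: "s0 - s \<in> {a..b}" using assms by auto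
      show "?p + s *\<^sub>R (- v) \<in> DD" using seg[rule_format, OF h] by (simp add: algebra_simps)
    qed
  qed
  ultimately show False by (simp add: Dx_minus)
qed

end

context geo begin

definition Sb :: "real^3 \<Rightarrow> real^3 \<Rightarrow> real set" where
  "Sb y v = {s. 0 \<le> s \<and> (\<forall>r\<in>{0..s}. y - r *\<^sub>R v \<in> DD)}"

definition tb :: "real^3 \<Rightarrow> real^3 \<Rightarrow> real" where "tb y v = Sup (Sb y v)"

lemma Sb_bdd: assumes "v \<noteq> 0" shows "bdd_above (Sb y v)"
proof -
  obtain B where B: "\<And>x. x \<in> DD \<Longrightarrow> norm x \<le> B" using bnd_DD by (auto simp: bounded_iff)
  have "s \<le> (norm y + B) / norm v" if "s \<in> Sb y v" for s
  proof -
    have s0: "0 \<le> s" and "y - s *\<^sub>R v \<in> DD" using that by (auto simp: Sb_def)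
    then have "norm (y - s *\<^sub>R v) \<le> B" using B by blast
    moreover have "norm (s *\<^sub>R v) \<le> norm y + norm (y - s *\<^sub>R v)"
      using norm_triangle_ineq4[of y "y - s *\<^sub>R v"] by simp
    ultimately have "s * norm v \<le> norm y + B" using s0 by simp
    then show ?thesis using assms by (simp add: field_simps)
  qed
  then show ?thesis by (rule bdd_aboveI)
qed

lemma zero_Sb: "y \<in> DD \<Longrightarrow> 0 \<in> Sb y v" by (simp add: Sb_def)

lemma tb_nn: "y \<in> DD \<Longrightarrow> v \<noteq> 0 \<Longrightarrow> 0 \<le> tb y v"
  unfolding tb_def by (rule cSup_upper[OF zero_Sb Sb_bdd])

lemma tb_max: "v \<noteq> 0 \<Longrightarrow> s \<in> Sb y v \<Longrightarrow> s \<le> tb y v"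
  unfolding tb_def by (rule cSup_upper[OF _ Sb_bdd])

lemma tb_seg:
  assumes y: "y \<in> DD" and v: "v \<noteq> 0" and r: "0 \<le> r" "r \<le> tb y v"
  shows "y - r *\<^sub>R v \<in> DD"
proof -
  have lt: "y - r *\<^sub>R v \<in> DD" if r0: "0 \<le> r" and rt: "r < tb y v" for r
  proof -
    obtain s where "s \<in> Sb y v" "r < s"
      using rt unfolding tb_def by (metis less_cSupE zero_Sb[OF y] empty_iff)
    then show ?thesis using r0 by (auto simp: Sb_def)
  qed
  show ?thesis
  proof (cases "r < tb y v")
    case True then show ?thesis using lt r by blast
  next
    case False
    then have req: "r = tb y v" using r by simp
    show ?thesis
    proof (cases "tb y v = 0")
      case True then show ?thesis using req y by simp
    next
      case False
      then have tpos: "0 < tb y v" using tb_nn[OF y v] by simp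
      have cl: "closed ((\<lambda>s. y - s *\<^sub>R v) -` DD)"
        by (rule closed_vimage) (auto intro!: continuous_intros)
      have "{0..<tb y v} \<subseteq> (\<lambda>s. y - s *\<^sub>R v) -` DD" using lt by auto
      then have "closure {0..<tb y v} \<subseteq> (\<lambda>s. y - s *\<^sub>R v) -` DD" using cl by (rule closure_minimal)
      then have "{0..tb y v} \<subseteq> (\<lambda>s. y - s *\<^sub>R v) -` DD" using tpos by (simp add: closure_atLeastLessThan)
      moreover have "tb y v \<in> {0..tb y v}" using tpos by simp
      ultimately show ?thesis using req by blast
    qed
  qed
qed

lemma tb_in: "y \<in> DD \<Longrightarrow> v \<noteq> 0 \<Longrightarrow> tb y v \<in> Sb y v"
  using tb_seg tb_nn unfolding Sb_def by auto

lemma tb_front: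
  assumes y: "y \<in> DD" and v: "v \<noteq> 0"
  shows "y - tb y v *\<^sub>R v \<in> frontier \<Omega>"
proof (rule ccontr)
  let ?t = "tb y v"
  assume "y - ?t *\<^sub>R v \<notin> frontier \<Omega>"
  moreover have "y - ?t *\<^sub>R v \<in> DD" using tb_seg[OF y v] tb_nn[OF y v] by simp
  ultimately have "y - ?t *\<^sub>R v \<in> \<Omega>" by (simp add: front_eq)
  then obtain e where e: "e > 0" "ball (y - ?t *\<^sub>R v) e \<subseteq> \<Omega>"
    using open_Om by (meson openE)
  define s where "s = ?t + e / (2 * norm v)"
  have nv: "norm v > 0" using v by simp
  have "s \<in> Sb y v"
    unfolding Sb_def
  proof (safe)
    show "0 \<le> s" unfolding s_def using tb_nn[OF y v] e nv by simp
    fix r assume r: "r \<in> {0..s}"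
    show "y - r *\<^sub>R v \<in> DD"
    proof (cases "r \<le> ?t")
      case True then show ?thesis using tb_seg[OF y v] r by auto
    next
      case False
      have "dist (y - ?t *\<^sub>R v) (y - r *\<^sub>R v) = (r - ?t) * norm v"
        using False by (simp add: dist_norm algebra_simps flip: scaleR_diff_left)
      also have "\<dots> \<le> (e / (2 * norm v)) * norm v"
        using r False nv unfolding s_def by (intro mult_right_mono) auto
      also have "\<dots> < e" using nv e by simp
      finally have "y - r *\<^sub>R v \<in> \<Omega>" using e(2) by auto
      then show ?thesis using Om_sub by auto
    qed
  qed
  then have "s \<le> ?t" by (rule tb_max[OF v])
  moreover have "e / (2 * norm v) > 0" using e nv by simp
  ultimately show False unfolding s_def by linarith
qed

lemma tb_open:
  assumes y: "y \<in> DD" and v: "v \<noteq> 0" and r: "0 < r" "r < tb y v"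
  shows "y - r *\<^sub>R v \<in> \<Omega>"
proof -
  have "y + r *\<^sub>R (- v) \<in> \<Omega>"
  proof (rule intr_lem[of "- v" 0 r "tb y v"])
    show "\<forall>s\<in>{0..tb y v}. y + s *\<^sub>R - v \<in> DD" using tb_seg[OF y v] by auto
  qed (use v r in auto)
  then show ?thesis by simp
qed

lemma line_deriv_m: "((\<lambda>s. \<xi> (y - s *\<^sub>R v)) has_real_derivative - Dx (y - s *\<^sub>R v) v) (at s)"
  using line_deriv[of y "- v" s] by (simp add: Dx_minus)

lemma tb_inc:
  assumes y: "y \<in> DD" and v: "v \<noteq> 0" and ng: "y \<in> frontier \<Omega> \<Longrightarrow> Dx y v \<noteq> 0"
  shows "Dx (y - tb y v *\<^sub>R v) v < 0"
proof (cases "tb y v = 0")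
  case False
  then have tpos: "0 < tb y v" using tb_nn[OF y v] by simp
  let ?x = "y - tb y v *\<^sub>R v"
  show ?thesis
  proof (rule trans_lem[OF front_zero[OF tb_front[OF y v]] v tpos])
    show "\<forall>s\<in>{0..tb y v}. ?x + s *\<^sub>R v \<in> DD"
    proof
      fix s assume s: "s \<in> {0..tb y v}"
      have "y - (tb y v - s) *\<^sub>R v \<in> DD" using s by (intro tb_seg[OF y v]) auto
      then show "?x + s *\<^sub>R v \<in> DD" by (simp add: algebra_simps)
    qed
  qed
next
  case True
  then have yf: "y \<in> frontier \<Omega>" using tb_front[OF y v] by simp
  have "\<not> Dx y v > 0"
  proof
    assume pos: "Dx y v > 0"
    have der: "((\<lambda>s. \<xi> (y - s *\<^sub>R v)) has_real_derivative - Dx (y - 0 *\<^sub>R v) v) (at 0)"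
      by (rule line_deriv_m)
    have neg: "- Dx (y - 0 *\<^sub>R v) v < 0" using pos by simp
    obtain d where d: "d > 0" "\<And>h. h > 0 \<Longrightarrow> h < d \<Longrightarrow> \<xi> (y - 0 *\<^sub>R v) > \<xi> (y - (0 + h) *\<^sub>R v)"
      using DERIV_neg_dec_right[OF der neg] by blast
    have "d / 2 \<in> Sb y v"
      unfolding Sb_def
    proof safe
      show "0 \<le> d / 2" using d by simp
      fix r assume r: "r \<in> {0..d/2}"
      show "y - r *\<^sub>R v \<in> DD"
      proof (cases "r = 0")
        case True then show ?thesis using y by simp
      next
        case False
        then have "\<xi> (y - r *\<^sub>R v) < \<xi> y" using d(2)[of r] r d(1) by auto
        then have "y - r *\<^sub>R v \<in> \<Omega>" using front_zero[OF yf] by (simp add: dom_def)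
        then show ?thesis using Om_sub by auto
      qed
    qed
    then have "d / 2 \<le> tb y v" by (rule tb_max[OF v])
    then show False using True d by simp
  qed
  then show ?thesis using ng[OF yf] True by simp
qed

lemma tb_beyond:
  assumes y: "y \<in> DD" and v: "v \<noteq> 0" and ng: "y \<in> frontier \<Omega> \<Longrightarrow> Dx y v \<noteq> 0"
  shows "\<exists>e>0. \<forall>s. tb y v < s \<and> s < tb y v + e \<longrightarrow> \<xi> (y - s *\<^sub>R v) > 0"
proof -
  let ?t = "tb y v"
  have "((\<lambda>s. \<xi> (y - s *\<^sub>R v)) has_real_derivative - Dx (y - ?t *\<^sub>R v) v) (at ?t)"
    by (rule line_deriv_m)
  moreover have "- Dx (y - ?t *\<^sub>R v) v > 0" using tb_inc[OF y v ng] by simp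
  ultimately obtain d where d: "d > 0" "\<And>h. h > 0 \<Longrightarrow> h < d \<Longrightarrow> \<xi> (y - ?t *\<^sub>R v) < \<xi> (y - (?t + h) *\<^sub>R v)"
    using DERIV_pos_inc_right by blast
  have z: "\<xi> (y - ?t *\<^sub>R v) = 0" using front_zero[OF tb_front[OF y v]] .
  show ?thesis
  proof (intro exI[of _ d] conjI allI impI)
    fix s assume s: "?t < s \<and> s < ?t + d"
    then show "\<xi> (y - s *\<^sub>R v) > 0" using d(2)[of "s - ?t"] z by auto
  qed (use d in auto)
qed

end


lemma seq_not_eventually:
  fixes a :: "'a::metric_space"
  assumes "\<not> eventually P (at a within S)"
  shows "\<exists>X. (\<forall>n. X n \<in> S \<and> \<not> P (X n)) \<and> X \<longlonglongrightarrow> a"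
proof -
  have "\<forall>d>0. \<exists>x\<in>S. x \<noteq> a \<and> dist x a < d \<and> \<not> P x"
    using assms unfolding eventually_at by blast
  then have "\<forall>n. \<exists>x. x \<in> S \<and> dist x a < inverse (real (Suc n)) \<and> \<not> P x"
    by (metis inverse_positive_iff_positive of_nat_0_less_iff zero_less_Suc)
  then obtain X where X: "\<And>n. X n \<in> S \<and> dist (X n) a < inverse (real (Suc n)) \<and> \<not> P (X n)"
    by metis
  have "X \<longlonglongrightarrow> a"
  proof (rule metric_LIMSEQ_I)
    fix r :: real assume r: "0 < r"
    obtain N where N: "inverse (real (Suc N)) < r" using reals_Archimedean[OF r] by blast
    show "\<exists>no. \<forall>n\<ge>no. dist (X n) a < r"
    proof (intro exI allI impI)
      fix n assume "N \<le> n"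
      then have "inverse (real (Suc n)) \<le> inverse (real (Suc N))"
        by (simp add: le_imp_inverse_le)
      then show "dist (X n) a < r" using X[of n] N by linarith
    qed
  qed
  then show ?thesis using X by blast
qed

context geo begin

definition Kset :: "((real^3) \<times> (real^3)) set" where
  "Kset = {(y, v). y \<in> DD \<and> v \<noteq> 0 \<and> (y \<in> frontier \<Omega> \<longrightarrow> Dx y v \<noteq> 0)}"

lemma Dx_cont_at: "((\<lambda>n. Dx (Y n) (V n)) \<longlonglongrightarrow> Dx y v)" if "Y \<longlonglongrightarrow> y" "V \<longlonglongrightarrow> v"
proof -
  have "((\<lambda>n. (Y n, V n)) \<longlonglongrightarrow> (y, v))" using that by (rule tendsto_Pair)
  from continuous_on_tendsto_compose[OF Dx_cont2[of UNIV] this]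
  show ?thesis by simp
qed

lemma lower_ev:
  assumes yv: "(y, v) \<in> Kset" and s1: "0 \<le> s1" "s1 < tb y v"
  shows "eventually (\<lambda>p. \<forall>r\<in>{0..s1}. fst p - r *\<^sub>R snd p \<in> DD) (at (y, v) within Kset)"
proof (rule ccontr)
  have y: "y \<in> DD" and v: "v \<noteq> 0" and ng: "y \<in> frontier \<Omega> \<Longrightarrow> Dx y v \<noteq> 0" using yv by (auto simp: Kset_def)
  assume "\<not> ?thesis"
  then obtain X where X: "\<And>n. X n \<in> Kset" "\<And>n. \<not> (\<forall>r\<in>{0..s1}. fst (X n) - r *\<^sub>R snd (X n) \<in> DD)"
    and Xl: "X \<longlonglongrightarrow> (y, v)"
    using seq_not_eventually by blast
  then have "\<forall>n. \<exists>r. r \<in> {0..s1} \<and> fst (X n) - r *\<^sub>R snd (X n) \<notin> DD" by blast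
  then obtain R where R: "\<And>n. R n \<in> {0..s1}" "\<And>n. fst (X n) - R n *\<^sub>R snd (X n) \<notin> DD" by metis
  obtain rs \<sigma> where rs: "rs \<in> {0..s1}" and \<sigma>: "strict_mono \<sigma>" and Rl: "(R \<circ> \<sigma>) \<longlonglongrightarrow> rs"
    using seq_compactE[OF compact_imp_seq_compact[OF compact_Icc[of 0 s1]], of R] R(1) by blast
  define Y where "Y = (\<lambda>n. fst (X (\<sigma> n)))"
  define V where "V = (\<lambda>n. snd (X (\<sigma> n)))"
  define Rr where "Rr = (\<lambda>n. R (\<sigma> n))"
  have Xs: "(X \<circ> \<sigma>) \<longlonglongrightarrow> (y, v)" using LIMSEQ_subseq_LIMSEQ[OF Xl \<sigma>] .
  have Yl: "Y \<longlonglongrightarrow> y" unfolding Y_def using tendsto_fst[OF Xs] by (simp add: o_def)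
  have Vl: "V \<longlonglongrightarrow> v" unfolding V_def using tendsto_snd[OF Xs] by (simp add: o_def)
  have Rrl: "Rr \<longlonglongrightarrow> rs" unfolding Rr_def using Rl by (simp add: o_def)
  have Zout: "Y n - Rr n *\<^sub>R V n \<notin> DD" for n unfolding Y_def V_def Rr_def using R(2) .
  have Yin: "Y n \<in> DD" for n unfolding Y_def using X(1)[of "\<sigma> n"] by (auto simp: Kset_def)
  have Zl: "(\<lambda>n. Y n - Rr n *\<^sub>R V n) \<longlonglongrightarrow> y - rs *\<^sub>R v"
    by (intro tendsto_intros Yl Vl Rrl)
  have notin: "y - rs *\<^sub>R v \<notin> \<Omega>"
  proof
    assume "y - rs *\<^sub>R v \<in> \<Omega>"
    then have "eventually (\<lambda>n. Y n - Rr n *\<^sub>R V n \<in> \<Omega>) sequentially"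
      by (rule topological_tendstoD[OF Zl open_Om])
    then obtain n where "Y n - Rr n *\<^sub>R V n \<in> \<Omega>" by (auto simp: eventually_sequentially)
    then show False using Zout Om_sub by auto
  qed
  have rs0: "rs = 0"
  proof (rule ccontr)
    assume "rs \<noteq> 0"
    then have "0 < rs" "rs < tb y v" using rs s1 by auto
    then show False using tb_open[OF y v] notin by blast
  qed
  then have yf: "y \<in> frontier \<Omega>" using notin y by (simp add: front_eq)
  have tpos: "0 < tb y v" using s1 by linarith
  have "Dx y (- v) < 0"
  proof (rule trans_lem[OF front_zero[OF yf] _ tpos])
    show "- v \<noteq> 0" using v by simp
    show "\<forall>s\<in>{0..tb y v}. y + s *\<^sub>R - v \<in> DD" using tb_seg[OF y v] by auto
  qed
  then have Dpos: "Dx y v > 0" by (simp add: Dx_minus)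
  have "\<forall>n. \<exists>z. 0 < z \<and> z < Rr n \<and> Dx (Y n - z *\<^sub>R V n) (V n) \<le> 0"
  proof
    fix n
    have rpos: "0 < Rr n"
    proof (rule ccontr)
      assume "\<not> 0 < Rr n"
      then have "Rr n = 0" using R(1)[of "\<sigma> n"] unfolding Rr_def by auto
      then show False using Zout[of n] Yin[of n] by simp
    qed
    have "\<exists>z. 0 < z \<and> z < Rr n \<and> \<xi> (Y n - Rr n *\<^sub>R V n) - \<xi> (Y n - 0 *\<^sub>R V n) = (Rr n - 0) * (- Dx (Y n - z *\<^sub>R V n) (V n))"
      by (rule MVT2) (use rpos line_deriv_m in auto)
    then obtain z where z: "0 < z" "z < Rr n" "\<xi> (Y n - Rr n *\<^sub>R V n) - \<xi> (Y n) = Rr n * (- Dx (Y n - z *\<^sub>R V n) (V n))"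
      by auto
    have "Y n - Rr n *\<^sub>R V n \<notin> \<Omega>" using Zout[of n] Om_sub by auto
    then have "\<xi> (Y n - Rr n *\<^sub>R V n) \<ge> 0" by (simp add: dom_def)
    moreover have "\<xi> (Y n) \<le> 0" using DD_le[OF Yin] .
    ultimately have "Rr n * (- Dx (Y n - z *\<^sub>R V n) (V n)) \<ge> 0" using z(3) by linarith
    then have "Dx (Y n - z *\<^sub>R V n) (V n) \<le> 0" using rpos by (simp add: mult_le_0_iff)
    then show "\<exists>z. 0 < z \<and> z < Rr n \<and> Dx (Y n - z *\<^sub>R V n) (V n) \<le> 0" using z by blast
  qed
  then obtain Z where Z: "\<And>n. 0 < Z n" "\<And>n. Z n < Rr n" "\<And>n. Dx (Y n - Z n *\<^sub>R V n) (V n) \<le> 0" by metis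
  have Zl0: "Z \<longlonglongrightarrow> 0"
  proof (rule tendsto_sandwich[of "\<lambda>_. 0" _ _ Rr])
    show "eventually (\<lambda>n. 0 \<le> Z n) sequentially" using Z(1) by (simp add: less_imp_le)
    show "eventually (\<lambda>n. Z n \<le> Rr n) sequentially" using Z(2) by (simp add: less_imp_le)
    show "Rr \<longlonglongrightarrow> 0" using Rrl rs0 by simp
  qed simp
  have "(\<lambda>n. Dx (Y n - Z n *\<^sub>R V n) (V n)) \<longlonglongrightarrow> Dx (y - 0 *\<^sub>R v) v"
    by (intro Dx_cont_at tendsto_intros Yl Vl Zl0)
  then have "eventually (\<lambda>n. Dx (Y n - Z n *\<^sub>R V n) (V n) > 0) sequentially"
    using Dpos by (intro order_tendstoD(1)) auto
  then obtain n where "Dx (Y n - Z n *\<^sub>R V n) (V n) > 0" by (auto simp: eventually_sequentially)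
  then show False using Z(3)[of n] by simp
qed

lemma tb_cont:
  assumes yv: "(y, v) \<in> Kset"
  shows "continuous (at (y, v) within Kset) (\<lambda>p. tb (fst p) (snd p))"
  unfolding continuous_within
proof (simp only: fst_conv snd_conv, rule order_tendstoI)
  have y: "y \<in> DD" and v: "v \<noteq> 0" and ng: "y \<in> frontier \<Omega> \<Longrightarrow> Dx y v \<noteq> 0" using yv by (auto simp: Kset_def)
  have inK: "eventually (\<lambda>p. p \<in> Kset) (at (y, v) within Kset)" by (rule eventually_at_topological[THEN iffD2]) auto
  fix l assume l: "l < tb y v"
  show "eventually (\<lambda>p. l < tb (fst p) (snd p)) (at (y, v) within Kset)"
  proof (cases "l < 0")
    case True
    show ?thesis using inK
    proof (rule eventually_mono)
      fix p assume "p \<in> Kset"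
      then have "0 \<le> tb (fst p) (snd p)" by (intro tb_nn) (auto simp: Kset_def)
      then show "l < tb (fst p) (snd p)" using True by linarith
    qed
  next
    case False
    define s1 where "s1 = (l + tb y v) / 2"
    have s1: "0 \<le> s1" "s1 < tb y v" "l < s1" using False l unfolding s1_def by auto
    show ?thesis using eventually_conj[OF lower_ev[OF yv s1(1,2)] inK]
    proof (rule eventually_mono)
      fix p assume p: "(\<forall>r\<in>{0..s1}. fst p - r *\<^sub>R snd p \<in> DD) \<and> p \<in> Kset"
      then have "s1 \<in> Sb (fst p) (snd p)" using s1 by (simp add: Sb_def)
      then have "s1 \<le> tb (fst p) (snd p)" using p by (intro tb_max) (auto simp: Kset_def)
      then show "l < tb (fst p) (snd p)" using s1 by simp
    qed
  qed
next
  have y: "y \<in> DD" and v: "v \<noteq> 0" and ng: "y \<in> frontier \<Omega> \<Longrightarrow> Dx y v \<noteq> 0" using yv by (auto simp: Kset_def)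
  have inK: "eventually (\<lambda>p. p \<in> Kset) (at (y, v) within Kset)" by (rule eventually_at_topological[THEN iffD2]) auto
  fix u assume u: "tb y v < u"
  obtain e where e: "e > 0" "\<And>s. tb y v < s \<Longrightarrow> s < tb y v + e \<Longrightarrow> \<xi> (y - s *\<^sub>R v) > 0"
    using tb_beyond[OF y v ng] by blast
  define s1 where "s1 = min u (tb y v + e / 2)"
  have s1: "tb y v < s1" "s1 \<le> u" "s1 < tb y v + e" using u e unfolding s1_def by auto
  have pos: "\<xi> (y - s1 *\<^sub>R v) > 0" using e(2) s1 by blast
  have cont: "((\<lambda>p. \<xi> (fst p - s1 *\<^sub>R snd p)) \<longlongrightarrow> \<xi> (fst (y, v) - s1 *\<^sub>R snd (y, v))) (at (y, v) within Kset)"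
    by (intro continuous_on_tendsto_compose[OF xi_cont[of UNIV]] tendsto_intros) auto
  have "eventually (\<lambda>p. \<xi> (fst p - s1 *\<^sub>R snd p) > 0) (at (y, v) within Kset)"
    using order_tendstoD(1)[OF cont] pos by simp
  then show "eventually (\<lambda>p. tb (fst p) (snd p) < u) (at (y, v) within Kset)"
    using inK
  proof (rule eventually_elim2)
    fix p assume p: "\<xi> (fst p - s1 *\<^sub>R snd p) > 0" "p \<in> Kset"
    have "\<not> s1 \<le> tb (fst p) (snd p)"
    proof
      assume "s1 \<le> tb (fst p) (snd p)"
      then have "fst p - s1 *\<^sub>R snd p \<in> DD" using p(2) s1 tb_nn[OF y v]
        by (intro tb_seg) (auto simp: Kset_def)
      then show False using DD_le p(1) by fastforce
    qed
    then show "tb (fst p) (snd p) < u" using s1 by simp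
  qed
qed

end


lemma int_ext:
  fixes g :: "real \<Rightarrow> real"
  assumes "0 \<le> \<tau>" "\<tau> \<le> B"
  shows "integral {0..\<tau>} g = integral {0..B} (\<lambda>s. if s \<in> {0<..<\<tau>} - {c} then g s else 0)"
proof -
  have "integral {0..B} (\<lambda>s. if s \<in> {0<..<\<tau>} - {c} then g s else 0) = integral (({0<..<\<tau>} - {c}) \<inter> {0..B}) g"
    by (rule integral_restrict_Int)
  also have "({0<..<\<tau>} - {c}) \<inter> {0..B} = {0<..<\<tau>} - {c}" using assms by auto
  also have "integral ({0<..<\<tau>} - {c}) g = integral {0..\<tau>} g"
  proof (rule integral_spike_set)
    show "negligible {x \<in> ({0<..<\<tau>} - {c}) - {0..\<tau>}. g x \<noteq> 0}" by (rule negligible_subset[of "{}"]) auto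
    show "negligible {x \<in> {0..\<tau>} - ({0<..<\<tau>} - {c}). g x \<noteq> 0}"
      by (rule negligible_subset[of "{0, \<tau>, c}"]) auto
  qed
  finally show ?thesis by simp
qed

lemma int_open:
  fixes g :: "real \<Rightarrow> real"
  assumes U: "open U" "bounded U" and gc: "continuous_on U g" and gb: "\<And>s. s \<in> U \<Longrightarrow> \<bar>g s\<bar> \<le> Cb"
  shows "g integrable_on U"
proof (rule measurable_bounded_by_integrable_imp_integrable_real)
  show "U \<in> sets lebesgue" using U by simp
  show "g \<in> borel_measurable (lebesgue_on U)" using gc U by (intro continuous_imp_measurable_on_sets_lebesgue) auto
  show "(\<lambda>_. Cb) integrable_on U" using U by (intro integrable_on_const bounded_set_imp_lmeasurable) auto
qed (rule gb)

lemma int_ext_integrable: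
  fixes g :: "real \<Rightarrow> real"
  assumes "0 \<le> \<tau>" "\<tau> \<le> B" and gc: "continuous_on ({0<..<\<tau>} - {c}) g"
    and gb: "\<And>s. s \<in> {0<..<\<tau>} - {c} \<Longrightarrow> \<bar>g s\<bar> \<le> Cb"
  shows "(\<lambda>s. if s \<in> {0<..<\<tau>} - {c} then g s else 0) integrable_on {0..B}"
proof -
  have "g integrable_on ({0<..<\<tau>} - {c})"
    by (rule int_open[OF _ _ gc gb]) (auto intro: bounded_subset[of "{0..\<tau>}"])
  moreover have "({0<..<\<tau>} - {c}) \<inter> {0..B} = {0<..<\<tau>} - {c}" using assms by auto
  ultimately have "g integrable_on (({0<..<\<tau>} - {c}) \<inter> {0..B})" by simp
  then show ?thesis by (simp only: integrable_restrict_Int)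
qed

locale sol = geo +
  fixes q :: "real \<Rightarrow> real^3 \<Rightarrow> real^3 \<Rightarrow> real" and nuf :: "real^3 \<Rightarrow> real" and M :: real
  assumes nuf_cont: "continuous_on UNIV nuf"
    and qc: "\<And>t x v. 0 < t \<Longrightarrow> x \<in> dom \<xi> \<Longrightarrow> isCont (\<lambda>p. q (fst p) (fst (snd p)) (snd (snd p))) (t, x, v)"
    and qb: "\<And>t x v. 0 \<le> t \<Longrightarrow> x \<in> dom \<xi> \<Longrightarrow> \<bar>q t x v\<bar> \<le> M * nuf v"
begin

definition Iseg :: "real \<Rightarrow> real^3 \<Rightarrow> real^3 \<Rightarrow> real \<Rightarrow> real" where
  "Iseg t0 x0 w \<tau> = integral {0..\<tau>} (\<lambda>s. exp (- nuf w * (\<tau> - s)) * q (t0 + s) (x0 + s *\<^sub>R w) w)"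

definition SEG :: "(real \<times> (real^3) \<times> (real^3) \<times> real) set" where
  "SEG = {(t0, x0, w, \<tau>). 0 \<le> t0 \<and> 0 \<le> \<tau> \<and> (\<forall>s\<in>{0..\<tau>}. x0 + s *\<^sub>R w \<in> DD) \<and> (w = 0 \<longrightarrow> x0 \<in> \<Omega>)}"

lemma seg_open: "(t0, x0, w, \<tau>) \<in> SEG \<Longrightarrow> 0 < s \<Longrightarrow> s < \<tau> \<Longrightarrow> x0 + s *\<^sub>R w \<in> \<Omega>"
  unfolding SEG_def using intr_lem[of w 0 s \<tau> x0] by (cases "w = 0") auto

lemma q_cont_line: "0 < a + s \<Longrightarrow> b + s *\<^sub>R w \<in> \<Omega> \<Longrightarrow> isCont (\<lambda>s. q (a + s) (b + s *\<^sub>R w) w) s"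
proof -
  assume h: "0 < a + s" "b + s *\<^sub>R w \<in> \<Omega>"
  have "isCont (\<lambda>s. (a + s, b + s *\<^sub>R w, w)) s" by (intro continuous_intros)
  from isCont_o2[OF this qc[OF h]] show ?thesis by simp
qed

lemma nuf_tendsto: "W \<longlonglongrightarrow> w \<Longrightarrow> (\<lambda>k. nuf (W k)) \<longlonglongrightarrow> nuf w"
  using continuous_on_tendsto_compose[OF nuf_cont] by auto

lemma Iseg_cont:
  assumes p: "p \<in> SEG"
  shows "continuous (at p within SEG) (\<lambda>p. Iseg (fst p) (fst (snd p)) (fst (snd (snd p))) (snd (snd (snd p))))"
proof (rule continuous_within_sequentiallyI)
  fix P assume Pl: "P \<longlonglongrightarrow> p" and PS: "\<forall>n. P n \<in> SEG"
  obtain t0 x0 w \<tau> where pe: "p = (t0, x0, w, \<tau>)" by (cases p) auto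
  define T where "T = (\<lambda>k. fst (P k))"
  define X where "X = (\<lambda>k. fst (snd (P k)))"
  define W where "W = (\<lambda>k. fst (snd (snd (P k))))"
  define Tau where "Tau = (\<lambda>k. snd (snd (snd (P k))))"
  have Pe: "P k = (T k, X k, W k, Tau k)" for k by (simp add: T_def X_def W_def Tau_def)
  have PS': "(T k, X k, W k, Tau k) \<in> SEG" for k using PS Pe by metis
  have pS: "(t0, x0, w, \<tau>) \<in> SEG" using p pe by simp
  have Tl: "T \<longlonglongrightarrow> t0" unfolding T_def using tendsto_fst[OF Pl] pe by simp
  have Xl: "X \<longlonglongrightarrow> x0" unfolding X_def using tendsto_fst[OF tendsto_snd[OF Pl]] pe by simp
  have Wl: "W \<longlonglongrightarrow> w" unfolding W_def using tendsto_fst[OF tendsto_snd[OF tendsto_snd[OF Pl]]] pe by simp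
  have Taul: "Tau \<longlonglongrightarrow> \<tau>" unfolding Tau_def using tendsto_snd[OF tendsto_snd[OF tendsto_snd[OF Pl]]] pe by simp
  have T0: "0 \<le> T k" "0 \<le> Tau k" for k using PS'[of k] by (auto simp: SEG_def)
  have t00: "0 \<le> t0" "0 \<le> \<tau>" using pS by (auto simp: SEG_def)
  obtain Bt where "0 < Bt" "\<forall>k. norm (Tau k) \<le> Bt" using convergent_imp_Bseq[OF convergentI[OF Taul]] by (rule BseqE)
  then have Bt: "\<And>k. norm (Tau k) \<le> Bt" by blast
  define B where "B = max Bt \<tau>"
  have TauB: "Tau k \<le> B" for k using Bt[of k] unfolding B_def by auto
  have tauB: "\<tau> \<le> B" unfolding B_def by simp
  have nl: "(\<lambda>k. nuf (W k)) \<longlonglongrightarrow> nuf w" by (rule nuf_tendsto[OF Wl])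
  obtain Nb0 where "0 < Nb0" "\<forall>k. norm (nuf (W k)) \<le> Nb0" using convergent_imp_Bseq[OF convergentI[OF nl]] by (rule BseqE)
  then have Nb0: "\<And>k. norm (nuf (W k)) \<le> Nb0" by blast
  define Nb where "Nb = max Nb0 \<bar>nuf w\<bar>"
  have NbW: "\<bar>nuf (W k)\<bar> \<le> Nb" for k using Nb0[of k] unfolding Nb_def by auto
  have Nbw: "\<bar>nuf w\<bar> \<le> Nb" unfolding Nb_def by simp
  define Cb where "Cb = exp (Nb * B) * (\<bar>M\<bar> * Nb)"
  have gbound: "\<bar>exp (- nuf w' * (t' - s)) * q (a + s) (b + s *\<^sub>R w') w'\<bar> \<le> Cb"
    if "\<bar>nuf w'\<bar> \<le> Nb" "0 \<le> t' - s" "t' - s \<le> B" "0 \<le> a + s" "b + s *\<^sub>R w' \<in> \<Omega>" for w' t' s a b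
  proof -
    have "- nuf w' * (t' - s) \<le> Nb * B"
    proof -
      have "- nuf w' * (t' - s) \<le> \<bar>nuf w'\<bar> * (t' - s)" using mult_right_mono[of "- nuf w'" "\<bar>nuf w'\<bar>" "t' - s"] that(2) by simp
      also have "\<dots> \<le> Nb * B" using that by (intro mult_mono) auto
      finally show ?thesis .
    qed
    then have e: "exp (- nuf w' * (t' - s)) \<le> exp (Nb * B)" by simp
    have "\<bar>q (a + s) (b + s *\<^sub>R w') w'\<bar> \<le> M * nuf w'" using qb that(4,5) by blast
    also have "\<dots> \<le> \<bar>M * nuf w'\<bar>" by (rule abs_ge_self)
    also have "\<dots> = \<bar>M\<bar> * \<bar>nuf w'\<bar>" by (rule abs_mult)
    also have "\<dots> \<le> \<bar>M\<bar> * Nb" using that(1) by (intro mult_left_mono) auto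
    finally have qq: "\<bar>q (a + s) (b + s *\<^sub>R w') w'\<bar> \<le> \<bar>M\<bar> * Nb" .
    show ?thesis unfolding Cb_def abs_mult using e qq by (intro mult_mono) auto
  qed
  define g where "g = (\<lambda>k s. exp (- nuf (W k) * (Tau k - s)) * q (T k + s) (X k + s *\<^sub>R W k) (W k))"
  define g0 where "g0 = (\<lambda>s. exp (- nuf w * (\<tau> - s)) * q (t0 + s) (x0 + s *\<^sub>R w) w)"
  define f where "f = (\<lambda>k s. if s \<in> {0<..<Tau k} - {\<tau>} then g k s else 0)"
  define f0 where "f0 = (\<lambda>s. if s \<in> {0<..<\<tau>} - {\<tau>} then g0 s else 0)"
  have eqk: "Iseg (T k) (X k) (W k) (Tau k) = integral {0..B} (f k)" for k
    unfolding Iseg_def f_def g_def by (rule int_ext[OF T0(2) TauB])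
  have eq0: "Iseg t0 x0 w \<tau> = integral {0..B} f0"
    unfolding Iseg_def f0_def g0_def by (rule int_ext[OF t00(2) tauB])
  have gk_cont: "continuous_on ({0<..<Tau k} - {\<tau>}) (g k)" for k
  proof (rule continuous_at_imp_continuous_on, rule ballI)
    fix s assume s: "s \<in> {0<..<Tau k} - {\<tau>}"
    have a: "X k + s *\<^sub>R W k \<in> \<Omega>" using seg_open[OF PS'[of k]] s by auto
    have b: "0 < T k + s" using T0[of k] s by simp
    have "isCont (\<lambda>s. q (T k + s) (X k + s *\<^sub>R W k) (W k)) s" by (rule q_cont_line[OF b a])
    then show "isCont (g k) s" unfolding g_def by (intro continuous_intros)
  qed
  have gk_b: "\<bar>g k s\<bar> \<le> Cb" if "s \<in> {0<..<Tau k} - {\<tau>}" for k s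
    unfolding g_def using that TauB[of k] T0[of k] seg_open[OF PS'[of k], of s]
    by (intro gbound NbW) auto
  have fk_int: "f k integrable_on {0..B}" for k
    unfolding f_def by (rule int_ext_integrable[OF T0(2) TauB gk_cont gk_b])
  have fk_b: "norm (f k s) \<le> Cb" for k s
  proof -
    have "0 \<le> Cb" unfolding Cb_def using NbW[of 0] by simp
    then show ?thesis unfolding f_def using gk_b by auto
  qed
  have conv: "(\<lambda>k. f k s) \<longlonglongrightarrow> f0 s" if s: "s \<in> {0..B}" for s
  proof (cases "0 < s \<and> s < \<tau>")
    case True
    have ev: "eventually (\<lambda>k. s < Tau k) sequentially" using Taul True by (intro order_tendstoD(1)) auto
    have ev2: "eventually (\<lambda>k. g k s = f k s) sequentially"
      using ev by eventually_elim (use True in \<open>auto simp: f_def\<close>)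
    have in0: "x0 + s *\<^sub>R w \<in> \<Omega>" using seg_open[OF pS] True by auto
    have t0s: "0 < t0 + s" using True t00 by simp
    have "(\<lambda>k. q (T k + s) (X k + s *\<^sub>R W k) (W k)) \<longlonglongrightarrow> q (t0 + s) (x0 + s *\<^sub>R w) w"
    proof -
      have "(\<lambda>k. (T k + s, X k + s *\<^sub>R W k, W k)) \<longlonglongrightarrow> (t0 + s, x0 + s *\<^sub>R w, w)"
        by (intro tendsto_intros Tl Xl Wl)
      from continuous_within_tendsto_compose'[OF qc[OF t0s in0, of w] _ this]
      show ?thesis by simp
    qed
    then have "(\<lambda>k. g k s) \<longlonglongrightarrow> g0 s" unfolding g_def g0_def
      by (intro tendsto_intros nl Taul)
    moreover have "f0 s = g0 s" using True by (simp add: f0_def)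
    ultimately show ?thesis using Lim_transform_eventually[OF _ ev2] by simp
  next
    case False
    then have f00: "f0 s = 0" by (auto simp: f0_def)
    have "eventually (\<lambda>k. f k s = 0) sequentially"
    proof (cases "s \<le> 0 \<or> s = \<tau>")
      case True then show ?thesis by (auto simp: f_def)
    next
      case False
      then have "\<tau> < s" using \<open>\<not> (0 < s \<and> s < \<tau>)\<close> by auto
      then have "eventually (\<lambda>k. Tau k < s) sequentially" using Taul by (intro order_tendstoD(2)) auto
      then show ?thesis by eventually_elim (auto simp: f_def)
    qed
    then show ?thesis using f00 by (simp add: tendsto_eventually)
  qed
  have "(\<lambda>k. integral {0..B} (f k)) \<longlonglongrightarrow> integral {0..B} f0"
    by (rule dominated_convergence(2)[OF fk_int _ fk_b conv]) (simp add: integrable_on_const)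
  then show "(\<lambda>n. Iseg (fst (P n)) (fst (snd (P n))) (fst (snd (snd (P n)))) (snd (snd (snd (P n)))))
      \<longlonglongrightarrow> Iseg (fst p) (fst (snd p)) (fst (snd (snd p))) (snd (snd (snd p)))"
    using eqk eq0 by (simp add: Pe pe)
qed

end


lemma tendsto_within_cases:
  fixes a :: "'a::topological_space"
  assumes A: "(f \<longlongrightarrow> l) (at a within A)" and B: "(f \<longlongrightarrow> l) (at a within B)"
    and ev: "eventually (\<lambda>x. x \<in> A \<or> x \<in> B) (at a within S)"
  shows "(f \<longlongrightarrow> l) (at a within S)"
proof (rule topological_tendstoI)
  fix T assume T: "open T" "l \<in> T"
  have 1: "eventually (\<lambda>x. x \<noteq> a \<longrightarrow> x \<in> A \<longrightarrow> f x \<in> T) (nhds a)"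
    using topological_tendstoD[OF A T] by (simp add: eventually_at_filter)
  have 2: "eventually (\<lambda>x. x \<noteq> a \<longrightarrow> x \<in> B \<longrightarrow> f x \<in> T) (nhds a)"
    using topological_tendstoD[OF B T] by (simp add: eventually_at_filter)
  have 3: "eventually (\<lambda>x. x \<noteq> a \<longrightarrow> x \<in> S \<longrightarrow> x \<in> A \<or> x \<in> B) (nhds a)"
    using ev by (simp add: eventually_at_filter)
  have "eventually (\<lambda>x. x \<noteq> a \<longrightarrow> x \<in> S \<longrightarrow> f x \<in> T) (nhds a)"
    using 1 2 3 by eventually_elim blast
  then show "eventually (\<lambda>x. f x \<in> T) (at a within S)" by (simp add: eventually_at_filter)
qed

lemma tendsto_within_transfer:
  fixes a :: "'a::topological_space"
  assumes A: "(f \<longlongrightarrow> l) (at a within A)" and ev: "eventually (\<lambda>x. x \<in> A) (at a within S)"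
  shows "(f \<longlongrightarrow> l) (at a within S)"
  using tendsto_within_cases[OF A A] ev by simp

lemma eventually_within_self: "eventually (\<lambda>x. x \<in> S) (at a within S)"
  by (simp add: eventually_at_filter)

locale mainloc = sol +
  fixes h0 :: "real^3 \<Rightarrow> real^3 \<Rightarrow> real" and h :: "real \<Rightarrow> real^3 \<Rightarrow> real^3 \<Rightarrow> real"
  assumes h0c: "continuous_on ((closure (dom \<xi>) \<times> UNIV) - gamma_zero \<xi>) (\<lambda>(x, v). h0 x v)"
    and compat: "\<forall>(x, v)\<in>gamma_minus \<xi>. h0 x v = h0 x (- v)"
    and hinit: "\<And>x v. x \<in> closure (dom \<xi>) \<Longrightarrow> h 0 x v = h0 x v"
    and hbc: "\<And>t x v. t > 0 \<Longrightarrow> x \<in> frontier (dom \<xi>) \<Longrightarrow> h t x v = h t x (- v)"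
    and hduh: "\<And>t \<tau> x v. 0 \<le> t \<Longrightarrow> 0 \<le> \<tau> \<Longrightarrow> (\<forall>s\<in>{0..\<tau>}. x + s *\<^sub>R v \<in> closure (dom \<xi>)) \<Longrightarrow>
        h (t + \<tau>) (x + \<tau> *\<^sub>R v) v = exp (- nuf v * \<tau>) * h t x v + Iseg t x v \<tau>"
begin

definition RR :: "(real \<times> (real^3) \<times> (real^3)) set" where
  "RR = {0..} \<times> ((DD \<times> UNIV) - gamma_zero \<xi>)"

definition HH :: "real \<times> (real^3) \<times> (real^3) \<Rightarrow> real" where
  "HH p = h (fst p) (fst (snd p)) (snd (snd p))"

definition NG :: "real^3 \<Rightarrow> real^3 \<Rightarrow> bool" where
  "NG y v \<longleftrightarrow> y \<in> DD \<and> (y \<in> frontier \<Omega> \<longrightarrow> Dx y v \<noteq> 0)"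

lemma gz_iff: "(x, v) \<in> gamma_zero \<xi> \<longleftrightarrow> x \<in> frontier \<Omega> \<and> Dx x v = 0"
  unfolding gamma_zero_def using normal_sign by auto

lemma RR_iff: "(t, y, v) \<in> RR \<longleftrightarrow> 0 \<le> t \<and> NG y v"
  unfolding RR_def NG_def using gz_iff by auto

lemma NG_zero: "NG y 0 \<longleftrightarrow> y \<in> \<Omega>"
  unfolding NG_def using Om_sub front_eq by (auto simp: Dx_grad)

lemma Kset_iff: "(y, v) \<in> Kset \<longleftrightarrow> NG y v \<and> v \<noteq> 0"
  unfolding Kset_def NG_def by auto

lemma gz_closed: "closed (gamma_zero \<xi>)"
proof -
  have "gamma_zero \<xi> = (frontier \<Omega> \<times> UNIV) \<inter> ((\<lambda>p. Dx (fst p) (snd p)) -` {0})"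
    using gz_iff by auto
  moreover have "closed ((\<lambda>p. Dx (fst p) (snd p)) -` {0})" by (rule closed_vimage) (auto intro: Dx_cont2)
  ultimately show ?thesis by (auto intro: closed_Times)
qed

lemma h0_cont_at:
  assumes "NG z w"
  shows "continuous (at (z, w) within DD \<times> UNIV) (\<lambda>(x, v). h0 x v)"
proof -
  have zw: "(z, w) \<notin> gamma_zero \<xi>" "z \<in> DD" using assms gz_iff unfolding NG_def by auto
  have "continuous (at (z, w) within (DD \<times> UNIV) - gamma_zero \<xi>) (\<lambda>(x, v). h0 x v)"
    using h0c zw by (simp add: continuous_on_eq_continuous_within)
  moreover have "at (z, w) within (DD \<times> UNIV) - gamma_zero \<xi> = at (z, w) within DD \<times> UNIV"
    by (rule at_within_nhd[of _ "- gamma_zero \<xi>"]) (use zw gz_closed in auto)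
  ultimately show ?thesis by simp
qed

definition segc :: "real \<times> (real^3) \<times> (real^3) \<Rightarrow> bool" where
  "segc p \<longleftrightarrow> (\<forall>r\<in>{0..fst p}. fst (snd p) - r *\<^sub>R snd (snd p) \<in> DD)"

definition FF :: "real \<times> (real^3) \<times> (real^3) \<Rightarrow> real" where
  "FF p = exp (- nuf (snd (snd p)) * fst p) * h0 (fst (snd p) - fst p *\<^sub>R snd (snd p)) (snd (snd p))
     + Iseg 0 (fst (snd p) - fst p *\<^sub>R snd (snd p)) (snd (snd p)) (fst p)"

lemma HH_FF:
  assumes "(t, y, v) \<in> RR" "segc (t, y, v)"
  shows "HH (t, y, v) = FF (t, y, v)"
proof -
  have t0: "0 \<le> t" using assms RR_iff by auto
  have seg: "\<forall>s\<in>{0..t}. (y - t *\<^sub>R v) + s *\<^sub>R v \<in> DD"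
  proof
    fix s assume "s \<in> {0..t}"
    then have "t - s \<in> {0..t}" by auto
    then have "y - (t - s) *\<^sub>R v \<in> DD" using assms(2) unfolding segc_def by auto
    then show "(y - t *\<^sub>R v) + s *\<^sub>R v \<in> DD" by (simp add: algebra_simps)
  qed
  have "h (0 + t) ((y - t *\<^sub>R v) + t *\<^sub>R v) v = exp (- nuf v * t) * h 0 (y - t *\<^sub>R v) v + Iseg 0 (y - t *\<^sub>R v) v t"
    by (rule hduh[OF order_refl t0 seg])
  moreover have "h 0 (y - t *\<^sub>R v) v = h0 (y - t *\<^sub>R v) v"
    using seg t0 by (intro hinit) (auto dest: bspec[of _ _ 0])
  ultimately show ?thesis unfolding HH_def FF_def by simp
qed

lemma NG_end:
  assumes "(t, y, v) \<in> RR" "segc (t, y, v)"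
  shows "NG (y - t *\<^sub>R v) v"
proof -
  have t0: "0 \<le> t" and ng: "NG y v" using assms RR_iff by auto
  have zD: "y - t *\<^sub>R v \<in> DD" using assms(2) t0 unfolding segc_def by auto
  show ?thesis unfolding NG_def
  proof (intro conjI zD impI)
    assume zf: "y - t *\<^sub>R v \<in> frontier \<Omega>"
    show "Dx (y - t *\<^sub>R v) v \<noteq> 0"
    proof (cases "v = 0")
      case True
      then show ?thesis using ng zf NG_zero front_eq by auto
    next
      case False
      show ?thesis
      proof (cases "t = 0")
        case True then show ?thesis using ng zf unfolding NG_def by simp
      next
        case tn: False
        have "Dx (y - t *\<^sub>R v) v < 0"
        proof (rule trans_lem[OF front_zero[OF zf] False])
          show "0 < t" using t0 tn by simp
          show "\<forall>s\<in>{0..t}. y - t *\<^sub>R v + s *\<^sub>R v \<in> DD"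
          proof
            fix s assume "s \<in> {0..t}"
            then have "t - s \<in> {0..t}" by auto
            then have "y - (t - s) *\<^sub>R v \<in> DD" using assms(2) unfolding segc_def by auto
            then show "y - t *\<^sub>R v + s *\<^sub>R v \<in> DD" by (simp add: algebra_simps)
          qed
        qed
        then show ?thesis by simp
      qed
    qed
  qed
qed

lemma SEG_mem:
  assumes "(t, y, v) \<in> RR" "segc (t, y, v)"
  shows "(0, y - t *\<^sub>R v, v, t) \<in> SEG"
proof -
  have t0: "0 \<le> t" and ng: "NG y v" using assms RR_iff by auto
  have "\<forall>s\<in>{0..t}. (y - t *\<^sub>R v) + s *\<^sub>R v \<in> DD"
  proof
    fix s assume "s \<in> {0..t}"
    then have "t - s \<in> {0..t}" by auto
    then have "y - (t - s) *\<^sub>R v \<in> DD" using assms(2) unfolding segc_def by auto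
    then show "(y - t *\<^sub>R v) + s *\<^sub>R v \<in> DD" by (simp add: algebra_simps)
  qed
  moreover have "v = 0 \<longrightarrow> y - t *\<^sub>R v \<in> \<Omega>" using ng NG_zero by auto
  ultimately show ?thesis unfolding SEG_def using t0 by auto
qed

lemma FF_cont:
  assumes p: "p \<in> RR" "segc p"
  shows "continuous (at p within {p \<in> RR. segc p}) FF"
proof -
  obtain t y v where pe: "p = (t, y, v)" by (cases p) auto
  let ?S = "{p \<in> RR. segc p}"
  have c1: "continuous (at p within ?S) (\<lambda>p. exp (- nuf (snd (snd p)) * fst p))"
    by (intro continuous_intros continuous_within_compose2[OF _ continuous_on_imp_continuous_within[OF nuf_cont]]) auto
  have c2: "continuous (at p within ?S) (\<lambda>p. h0 (fst (snd p) - fst p *\<^sub>R snd (snd p)) (snd (snd p)))"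
  proof -
    let ?phi = "\<lambda>p. (fst (snd p) - fst p *\<^sub>R snd (snd p), snd (snd p))"
    have "continuous (at p within ?S) ?phi" by (intro continuous_intros)
    moreover have "continuous (at (?phi p) within ?phi ` ?S) (\<lambda>(x, v). h0 x v)"
    proof -
      have ngz: "NG (fst (snd p) - fst p *\<^sub>R snd (snd p)) (snd (snd p))" using NG_end p unfolding pe by simp
      show ?thesis
      proof (rule continuous_within_subset[OF h0_cont_at[OF ngz]])
      show "?phi ` ?S \<subseteq> DD \<times> UNIV"
      proof
        fix z assume "z \<in> ?phi ` ?S"
        then obtain pp where pp: "pp \<in> RR" "segc pp" "z = ?phi pp" by blast
        have "0 \<le> fst pp" using pp(1) by (auto simp: RR_def)
        then have "fst z \<in> DD" using pp(2,3) unfolding segc_def by auto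
        then show "z \<in> DD \<times> UNIV" by (cases z) auto
      qed
    qed
    qed
    ultimately show ?thesis using continuous_within_compose2[of p ?S ?phi "\<lambda>(x, v). h0 x v"] by simp
  qed
  have c3: "continuous (at p within ?S) (\<lambda>p. Iseg 0 (fst (snd p) - fst p *\<^sub>R snd (snd p)) (snd (snd p)) (fst p))"
  proof -
    let ?psi = "\<lambda>p. (0::real, fst (snd p) - fst p *\<^sub>R snd (snd p), snd (snd p), fst p)"
    have "continuous (at p within ?S) ?psi" by (intro continuous_intros)
    moreover have "continuous (at (?psi p) within ?psi ` ?S) (\<lambda>p. Iseg (fst p) (fst (snd p)) (fst (snd (snd p))) (snd (snd (snd p))))"
    proof (rule continuous_within_subset[OF Iseg_cont])
      show "?psi p \<in> SEG" using SEG_mem p pe by simp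
      show "?psi ` ?S \<subseteq> SEG" using SEG_mem by auto
    qed
    ultimately have "continuous (at p within ?S) (\<lambda>x. (\<lambda>p. Iseg (fst p) (fst (snd p)) (fst (snd (snd p))) (snd (snd (snd p)))) (?psi x))"
      by (rule continuous_within_compose2)
    then show ?thesis by simp
  qed
  show ?thesis unfolding FF_def by (intro continuous_intros c1 c2 c3)
qed

lemma cont_base:
  assumes p: "p \<in> RR" "segc p" and ev: "eventually segc (at p within RR)"
  shows "continuous (at p within RR) HH"
proof -
  let ?S = "{p \<in> RR. segc p}"
  have "(FF \<longlongrightarrow> FF p) (at p within ?S)" using FF_cont[OF p] by (simp add: continuous_within)
  moreover have "eventually (\<lambda>x. FF x = HH x) (at p within ?S)"
    using eventually_within_self[of ?S p] by eventually_elim (auto intro: HH_FF[symmetric])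
  ultimately have "(HH \<longlongrightarrow> FF p) (at p within ?S)" by (rule Lim_transform_eventually)
  moreover have "eventually (\<lambda>x. x \<in> ?S) (at p within RR)"
    using ev eventually_within_self[of RR p] by eventually_elim auto
  ultimately have "(HH \<longlongrightarrow> FF p) (at p within RR)" by (rule tendsto_within_transfer)
  moreover have "HH p = FF p" using p HH_FF by (cases p) auto
  ultimately show ?thesis by (simp add: continuous_within)
qed

end

context mainloc begin

definition TB :: "real \<times> (real^3) \<times> (real^3) \<Rightarrow> real" where "TB p = tb (fst (snd p)) (snd (snd p))"
definition XB :: "real \<times> (real^3) \<times> (real^3) \<Rightarrow> real^3" where "XB p = fst (snd p) - TB p *\<^sub>R snd (snd p)"
definition QQ :: "real \<times> (real^3) \<times> (real^3) \<Rightarrow> real \<times> (real^3) \<times> (real^3)" where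
  "QQ p = (fst p - TB p, XB p, - snd (snd p))"
definition BB :: "(real \<times> (real^3) \<times> (real^3)) set" where
  "BB = {p \<in> RR. snd (snd p) \<noteq> 0 \<and> TB p < fst p}"

lemma RR_D: "p \<in> RR \<Longrightarrow> 0 \<le> fst p \<and> NG (fst (snd p)) (snd (snd p))"
  using RR_iff[of "fst p" "fst (snd p)" "snd (snd p)"] by simp

lemma RR_K: "p \<in> RR \<Longrightarrow> snd (snd p) \<noteq> 0 \<Longrightarrow> snd p \<in> Kset"
  using RR_D Kset_iff[of "fst (snd p)" "snd (snd p)"] by simp

lemma RR_y: "p \<in> RR \<Longrightarrow> fst (snd p) \<in> DD" using RR_D unfolding NG_def by blast

lemma TB_tendsto:
  assumes p: "p \<in> RR" "snd (snd p) \<noteq> 0" and S: "\<And>x. x \<in> S \<Longrightarrow> x \<in> RR \<and> snd (snd x) \<noteq> 0"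
  shows "(TB \<longlongrightarrow> TB p) (at p within S)"
proof -
  have c: "continuous (at (snd p) within Kset) (\<lambda>p. tb (fst p) (snd p))"
    using tb_cont[of "fst (snd p)" "snd (snd p)"] RR_K[OF p] by simp
  have ev: "eventually (\<lambda>x. snd x \<in> Kset) (at p within S)"
    using eventually_within_self[of S p] by eventually_elim (use S RR_K in blast)
  have "((\<lambda>x. snd x) \<longlongrightarrow> snd p) (at p within S)" by (intro tendsto_intros)
  from continuous_within_tendsto_compose[OF c ev this] show ?thesis unfolding TB_def by simp
qed

lemma v_ev: "snd (snd p) \<noteq> 0 \<Longrightarrow> eventually (\<lambda>x. snd (snd x) \<noteq> 0) (at p within S)"
  for p :: "real \<times> (real^3) \<times> (real^3)"
proof -
  assume a: "snd (snd p) \<noteq> 0"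
  have "((\<lambda>x. snd (snd x)) \<longlongrightarrow> snd (snd p)) (at p within S)" by (intro tendsto_intros)
  moreover have o: "open (- {0::real^3})" by (rule open_Compl) simp
  ultimately have "eventually (\<lambda>x. snd (snd x) \<in> - {0}) (at p within S)"
    using a by (intro topological_tendstoD) auto
  then show ?thesis by simp
qed

lemma TB_tendsto_RR:
  assumes p: "p \<in> RR" "snd (snd p) \<noteq> 0"
  shows "(TB \<longlongrightarrow> TB p) (at p within RR)"
proof (rule tendsto_within_transfer)
  show "(TB \<longlongrightarrow> TB p) (at p within {x \<in> RR. snd (snd x) \<noteq> 0})" by (rule TB_tendsto[OF p]) auto
  show "eventually (\<lambda>x. x \<in> {x \<in> RR. snd (snd x) \<noteq> 0}) (at p within RR)"
    using v_ev[OF p(2), of RR] eventually_within_self[of RR p] by eventually_elim auto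
qed

lemma TB_nn: "p \<in> RR \<Longrightarrow> snd (snd p) \<noteq> 0 \<Longrightarrow> 0 \<le> TB p"
  unfolding TB_def using RR_y tb_nn by blast

lemma seg_of_le:
  assumes "x \<in> RR" "snd (snd x) \<noteq> 0" "fst x \<le> TB x"
  shows "segc x"
  unfolding segc_def using assms tb_seg[OF RR_y[OF assms(1)] assms(2)] RR_D[OF assms(1)]
  unfolding TB_def by auto

lemma XB_front: "p \<in> RR \<Longrightarrow> snd (snd p) \<noteq> 0 \<Longrightarrow> XB p \<in> frontier \<Omega>"
  unfolding XB_def TB_def using tb_front RR_y by blast

lemma XB_inc: "p \<in> RR \<Longrightarrow> snd (snd p) \<noteq> 0 \<Longrightarrow> Dx (XB p) (snd (snd p)) < 0"
  unfolding XB_def TB_def using tb_inc RR_y RR_D unfolding NG_def by blast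

lemma QQ_RR: "p \<in> RR \<Longrightarrow> snd (snd p) \<noteq> 0 \<Longrightarrow> TB p \<le> fst p \<Longrightarrow> QQ p \<in> RR"
proof -
  assume a: "p \<in> RR" "snd (snd p) \<noteq> 0" "TB p \<le> fst p"
  have "XB p \<in> DD" using XB_front[OF a(1,2)] front_eq by auto
  moreover have "Dx (XB p) (- snd (snd p)) \<noteq> 0" using XB_inc[OF a(1,2)] by (simp add: Dx_minus)
  ultimately show ?thesis unfolding QQ_def using a(3) RR_iff NG_def by auto
qed

lemma XB_seg: "p \<in> RR \<Longrightarrow> snd (snd p) \<noteq> 0 \<Longrightarrow> s \<in> {0..TB p} \<Longrightarrow> XB p + s *\<^sub>R snd (snd p) \<in> DD"
proof -
  assume a: "p \<in> RR" "snd (snd p) \<noteq> 0" "s \<in> {0..TB p}"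
  have "fst (snd p) - (TB p - s) *\<^sub>R snd (snd p) \<in> DD"
    using a tb_seg[OF RR_y[OF a(1)] a(2)] unfolding TB_def by auto
  then show ?thesis unfolding XB_def by (simp add: algebra_simps)
qed

lemma B_formula:
  assumes x: "x \<in> RR" "snd (snd x) \<noteq> 0" "TB x < fst x"
  shows "HH x = exp (- nuf (snd (snd x)) * TB x) * HH (QQ x) + Iseg (fst x - TB x) (XB x) (snd (snd x)) (TB x)"
proof -
  obtain t y v where xe: "x = (t, y, v)" by (cases x) auto
  have tb0: "0 \<le> TB x" using TB_nn x by simp
  have seg: "\<forall>s\<in>{0..TB x}. XB x + s *\<^sub>R v \<in> DD" using XB_seg[OF x(1,2)] xe by simp
  have "h ((t - TB x) + TB x) (XB x + TB x *\<^sub>R v) v = exp (- nuf v * TB x) * h (t - TB x) (XB x) v + Iseg (t - TB x) (XB x) v (TB x)"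
    by (rule hduh) (use x xe tb0 seg in auto)
  moreover have "h (t - TB x) (XB x) v = h (t - TB x) (XB x) (- v)"
    by (rule hbc) (use x xe XB_front in auto)
  moreover have "XB x + TB x *\<^sub>R v = y" unfolding XB_def xe by simp
  ultimately show ?thesis unfolding HH_def QQ_def xe by simp
qed

lemma tb_pos_out:
  assumes z: "z \<in> DD" "\<xi> z = 0" and u: "u \<noteq> 0" and d: "Dx z u > 0"
  shows "tb z u > 0"
proof -
  have der: "((\<lambda>s. \<xi> (z - s *\<^sub>R u)) has_real_derivative - Dx (z - 0 *\<^sub>R u) u) (at 0)" by (rule line_deriv_m)
  have neg: "- Dx (z - 0 *\<^sub>R u) u < 0" using d by simp
  obtain e where e: "e > 0" "\<And>h. h > 0 \<Longrightarrow> h < e \<Longrightarrow> \<xi> (z - 0 *\<^sub>R u) > \<xi> (z - (0 + h) *\<^sub>R u)"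
    using DERIV_neg_dec_right[OF der neg] by blast
  have "e / 2 \<in> Sb z u"
    unfolding Sb_def
  proof safe
    show "0 \<le> e / 2" using e by simp
    fix r assume r: "r \<in> {0..e/2}"
    show "z - r *\<^sub>R u \<in> DD"
    proof (cases "r = 0")
      case True then show ?thesis using z by simp
    next
      case False
      then have "\<xi> (z - r *\<^sub>R u) < 0" using e(2)[of r] r e(1) z(2) by auto
      then show ?thesis using Om_sub by (auto simp: dom_def)
    qed
  qed
  then have "e / 2 \<le> tb z u" by (rule tb_max[OF u])
  then show ?thesis using e by simp
qed

lemma TB_QQ_pos: "p \<in> RR \<Longrightarrow> snd (snd p) \<noteq> 0 \<Longrightarrow> TB (QQ p) > 0"
proof -
  assume a: "p \<in> RR" "snd (snd p) \<noteq> 0"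
  have "tb (XB p) (- snd (snd p)) > 0"
  proof (rule tb_pos_out)
    show "XB p \<in> DD" using XB_front[OF a] front_eq by auto
    show "\<xi> (XB p) = 0" using front_zero[OF XB_front[OF a]] .
    show "- snd (snd p) \<noteq> 0" using a by simp
    show "Dx (XB p) (- snd (snd p)) > 0" using XB_inc[OF a] by (simp add: Dx_minus)
  qed
  then show ?thesis unfolding TB_def QQ_def by simp
qed

lemma TB_QQ_ge: "p \<in> RR \<Longrightarrow> snd (snd p) \<noteq> 0 \<Longrightarrow> TB p \<le> TB (QQ p)"
proof -
  assume a: "p \<in> RR" "snd (snd p) \<noteq> 0"
  have mem: "TB p \<in> Sb (XB p) (- snd (snd p))"
    unfolding Sb_def using TB_nn[OF a] XB_seg[OF a] by auto
  have "TB p \<le> tb (XB p) (- snd (snd p))" using tb_max[of "- snd (snd p)" "TB p" "XB p"] a mem by simp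
  then show ?thesis unfolding TB_def QQ_def by simp
qed

end

context mainloc begin

lemma cont_b:
  assumes p: "p \<in> RR" "snd (snd p) \<noteq> 0" "fst p < TB p"
  shows "continuous (at p within RR) HH"
proof (rule cont_base)
  show "p \<in> RR" by (rule p)
  show "segc p" using seg_of_le p by auto
  have "((\<lambda>x. TB x - fst x) \<longlongrightarrow> TB p - fst p) (at p within RR)"
    by (intro tendsto_intros TB_tendsto_RR p)
  then have "eventually (\<lambda>x. TB x - fst x > 0) (at p within RR)"
    using p(3) by (intro order_tendstoD(1)) auto
  then show "eventually segc (at p within RR)"
    using v_ev[OF p(2), of RR] eventually_within_self[of RR p]
    by eventually_elim (auto intro: seg_of_le)
qed

lemma cont_v0:
  assumes p: "p \<in> RR" "snd (snd p) = 0"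
  shows "continuous (at p within RR) HH"
proof (rule cont_base)
  obtain t y where pe: "p = (t, y, 0)" using p by (cases p) auto
  have yO: "y \<in> \<Omega>" using p pe RR_iff NG_zero by auto
  obtain e where e: "e > 0" "ball y e \<subseteq> \<Omega>" using open_Om yO by (meson openE)
  show "p \<in> RR" by (rule p)
  show "segc p" unfolding segc_def pe using yO Om_sub by auto
  have t0: "0 \<le> t" using p pe RR_iff by auto
  have l1: "((\<lambda>x. norm (fst (snd x) - y)) \<longlongrightarrow> norm (fst (snd p) - y)) (at p within RR)"
    by (intro tendsto_intros)
  have l2: "((\<lambda>x. norm (snd (snd x)) * (t + 1)) \<longlongrightarrow> norm (snd (snd p)) * (t + 1)) (at p within RR)"
    by (intro tendsto_intros)
  have l3: "((\<lambda>x. fst x) \<longlongrightarrow> fst p) (at p within RR)" by (intro tendsto_intros)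
  have e1: "eventually (\<lambda>x. norm (fst (snd x) - y) < e / 2) (at p within RR)"
    using l1 e pe by (intro order_tendstoD(2)) auto
  have e2: "eventually (\<lambda>x. norm (snd (snd x)) * (t + 1) < e / 2) (at p within RR)"
    using l2 e pe by (intro order_tendstoD(2)) auto
  have e3: "eventually (\<lambda>x. fst x < t + 1) (at p within RR)"
    using l3 pe by (intro order_tendstoD(2)) auto
  show "eventually segc (at p within RR)"
    using e1 e2 e3
  proof eventually_elim
    case (elim x)
    show "segc x" unfolding segc_def
    proof
      fix r assume r: "r \<in> {0..fst x}"
      have "norm (fst (snd x) - r *\<^sub>R snd (snd x) - y) \<le> norm (fst (snd x) - y) + r * norm (snd (snd x))"
        using norm_triangle_ineq4[of "fst (snd x) - y" "r *\<^sub>R snd (snd x)"] r by (simp add: algebra_simps)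
      also have "r * norm (snd (snd x)) \<le> (t + 1) * norm (snd (snd x))"
        using r elim(3) by (intro mult_right_mono) auto
      finally have "dist y (fst (snd x) - r *\<^sub>R snd (snd x)) < e"
        using elim(1,2) by (simp add: dist_norm norm_minus_commute mult.commute)
      then show "fst (snd x) - r *\<^sub>R snd (snd x) \<in> DD" using e(2) Om_sub by auto
    qed
  qed
qed

lemma B_lim:
  assumes p: "p \<in> RR" "snd (snd p) \<noteq> 0" "TB p \<le> fst p"
    and cQ: "continuous (at (QQ p) within RR) HH"
  shows "(HH \<longlongrightarrow> exp (- nuf (snd (snd p)) * TB p) * HH (QQ p) + Iseg (fst p - TB p) (XB p) (snd (snd p)) (TB p)) (at p within BB)"
proof -
  have BS: "\<And>x. x \<in> BB \<Longrightarrow> x \<in> RR \<and> snd (snd x) \<noteq> 0" unfolding BB_def by auto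
  have TBl: "(TB \<longlongrightarrow> TB p) (at p within BB)" by (rule TB_tendsto[OF p(1,2) BS])
  have nl: "((\<lambda>x. nuf (snd (snd x))) \<longlongrightarrow> nuf (snd (snd p))) (at p within BB)"
    by (intro continuous_on_tendsto_compose[OF nuf_cont] tendsto_intros) auto
  have XBl: "(XB \<longlongrightarrow> XB p) (at p within BB)" unfolding XB_def by (intro tendsto_intros TBl)
  have QQl: "(QQ \<longlongrightarrow> QQ p) (at p within BB)" unfolding QQ_def by (intro tendsto_intros TBl XBl)
  have evQ: "eventually (\<lambda>x. QQ x \<in> RR) (at p within BB)"
    using eventually_within_self[of BB p] by eventually_elim (auto simp: BB_def intro: QQ_RR)
  have Hl: "((\<lambda>x. HH (QQ x)) \<longlongrightarrow> HH (QQ p)) (at p within BB)"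
    by (rule continuous_within_tendsto_compose[OF cQ evQ QQl])
  let ?sg = "\<lambda>x. (fst x - TB x, XB x, snd (snd x), TB x)"
  have sgS: "?sg x \<in> SEG" if "x \<in> RR" "snd (snd x) \<noteq> 0" "TB x \<le> fst x" for x
    unfolding SEG_def using that TB_nn XB_seg by auto
  have evS: "eventually (\<lambda>x. ?sg x \<in> SEG) (at p within BB)"
    using eventually_within_self[of BB p] by eventually_elim (auto simp: BB_def intro: sgS)
  have sgl: "(?sg \<longlongrightarrow> ?sg p) (at p within BB)" by (intro tendsto_intros TBl XBl)
  have Il: "((\<lambda>x. Iseg (fst x - TB x) (XB x) (snd (snd x)) (TB x)) \<longlongrightarrow> Iseg (fst p - TB p) (XB p) (snd (snd p)) (TB p)) (at p within BB)"
    using continuous_within_tendsto_compose[OF Iseg_cont[OF sgS[OF p]] evS sgl] by simp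
  have lim: "((\<lambda>x. exp (- nuf (snd (snd x)) * TB x) * HH (QQ x) + Iseg (fst x - TB x) (XB x) (snd (snd x)) (TB x)) \<longlongrightarrow>
     exp (- nuf (snd (snd p)) * TB p) * HH (QQ p) + Iseg (fst p - TB p) (XB p) (snd (snd p)) (TB p)) (at p within BB)"
    by (intro tendsto_intros nl TBl Hl Il)
  have "eventually (\<lambda>x. exp (- nuf (snd (snd x)) * TB x) * HH (QQ x) + Iseg (fst x - TB x) (XB x) (snd (snd x)) (TB x) = HH x) (at p within BB)"
    using eventually_within_self[of BB p] by eventually_elim (auto simp: BB_def B_formula)
  then show ?thesis by (rule Lim_transform_eventually[OF lim])
qed

lemma cont_d:
  assumes p: "p \<in> RR" "snd (snd p) \<noteq> 0" "TB p < fst p"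
    and cQ: "continuous (at (QQ p) within RR) HH"
  shows "continuous (at p within RR) HH"
proof -
  have "(HH \<longlongrightarrow> HH p) (at p within BB)"
    using B_lim[OF p(1,2) _ cQ] p B_formula by simp
  moreover have "eventually (\<lambda>x. x \<in> BB) (at p within RR)"
  proof -
    have "((\<lambda>x. fst x - TB x) \<longlongrightarrow> fst p - TB p) (at p within RR)"
      by (intro tendsto_intros TB_tendsto_RR p)
    then have "eventually (\<lambda>x. fst x - TB x > 0) (at p within RR)"
      using p(3) by (intro order_tendstoD(1)) auto
    then show ?thesis
      using v_ev[OF p(2), of RR] eventually_within_self[of RR p]
      by eventually_elim (auto simp: BB_def)
  qed
  ultimately show ?thesis unfolding continuous_within by (rule tendsto_within_transfer)
qed

lemma cont_c:
  assumes p: "p \<in> RR" "snd (snd p) \<noteq> 0" "fst p = TB p"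
  shows "continuous (at p within RR) HH"
proof -
  obtain t y v where pe: "p = (t, y, v)" by (cases p) auto
  let ?A = "{x \<in> RR. segc x}"
  have segp: "segc p" using seg_of_le p by auto
  have HF: "HH p = FF p" using HH_FF p segp pe by simp
  have lA: "(HH \<longlongrightarrow> HH p) (at p within ?A)"
  proof -
    have "(FF \<longlongrightarrow> FF p) (at p within ?A)" using FF_cont[OF p(1) segp] by (simp add: continuous_within)
    moreover have "eventually (\<lambda>x. FF x = HH x) (at p within ?A)"
      using eventually_within_self[of ?A p] by eventually_elim (auto intro: HH_FF[symmetric])
    ultimately show ?thesis using HF Lim_transform_eventually by fastforce
  qed
  have Q0: "QQ p = (0, XB p, - v)" unfolding QQ_def using p pe by simp
  have cQ: "continuous (at (QQ p) within RR) HH"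
  proof (rule cont_b)
    show "QQ p \<in> RR" using QQ_RR p by simp
    show "snd (snd (QQ p)) \<noteq> 0" using p pe Q0 by simp
    show "fst (QQ p) < TB (QQ p)" using TB_QQ_pos[OF p(1,2)] Q0 by simp
  qed
  have xbD: "XB p \<in> DD" using XB_front[OF p(1,2)] front_eq by auto
  have "HH (QQ p) = h0 (XB p) (- v)" unfolding Q0 HH_def using hinit[OF xbD] by simp
  also have "\<dots> = h0 (XB p) v"
  proof -
    have "(XB p, v) \<in> gamma_minus \<xi>"
      unfolding gamma_minus_def using XB_front[OF p(1,2)] XB_inc[OF p(1,2)] normal_sign pe by auto
    then show ?thesis using compat by auto
  qed
  finally have HQ: "HH (QQ p) = h0 (XB p) v" .
  have "exp (- nuf (snd (snd p)) * TB p) * HH (QQ p) + Iseg (fst p - TB p) (XB p) (snd (snd p)) (TB p) = FF p"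
    unfolding FF_def HQ XB_def using p pe by simp
  then have lB: "(HH \<longlongrightarrow> HH p) (at p within BB)" using B_lim[OF p(1,2) _ cQ] p HF by simp
  have ev: "eventually (\<lambda>x. x \<in> ?A \<or> x \<in> BB) (at p within RR)"
    using v_ev[OF p(2), of RR] eventually_within_self[of RR p]
  proof eventually_elim
    case (elim x)
    show ?case
    proof (cases "fst x \<le> TB x")
      case True then show ?thesis using seg_of_le elim by auto
    next
      case False then show ?thesis using elim by (auto simp: BB_def)
    qed
  qed
  show ?thesis unfolding continuous_within by (rule tendsto_within_cases[OF lA lB ev])
qed

lemma cont_n:
  "\<forall>p. p \<in> RR \<longrightarrow> snd (snd p) \<noteq> 0 \<longrightarrow> fst p - TB p \<le> real n * TB (QQ p) \<longrightarrow> continuous (at p within RR) HH"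
proof (induction n)
  case 0
  show ?case
  proof (intro allI impI)
    fix p assume p: "p \<in> RR" "snd (snd p) \<noteq> 0" "fst p - TB p \<le> real 0 * TB (QQ p)"
    show "continuous (at p within RR) HH"
    proof (cases "fst p < TB p")
      case True then show ?thesis using cont_b p by blast
    next
      case False then show ?thesis using cont_c p by simp
    qed
  qed
next
  case (Suc n)
  show ?case
  proof (intro allI impI)
    fix p assume p: "p \<in> RR" "snd (snd p) \<noteq> 0" "fst p - TB p \<le> real (Suc n) * TB (QQ p)"
    show "continuous (at p within RR) HH"
    proof (cases "fst p \<le> TB p")
      case True
      then show ?thesis using cont_b cont_c p by (cases "fst p < TB p") auto
    next
      case False
      then have lt: "TB p < fst p" by simp
      have QR: "QQ p \<in> RR" using QQ_RR p lt by simp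
      have Qv: "snd (snd (QQ p)) \<noteq> 0" using p by (simp add: QQ_def)
      have ge: "TB (QQ p) \<le> TB (QQ (QQ p))" by (rule TB_QQ_ge[OF QR Qv])
      have "fst (QQ p) - TB (QQ p) = fst p - TB p - TB (QQ p)" by (simp add: QQ_def)
      also have "\<dots> \<le> real n * TB (QQ p)" using p(3) by (simp add: algebra_simps)
      also have "\<dots> \<le> real n * TB (QQ (QQ p))" using ge by (intro mult_left_mono) auto
      finally have "continuous (at (QQ p) within RR) HH" using Suc.IH QR Qv by blast
      then show ?thesis by (rule cont_d[OF p(1,2) lt])
    qed
  qed
qed

lemma cont_all: "p \<in> RR \<Longrightarrow> continuous (at p within RR) HH"
proof -
  assume p: "p \<in> RR"
  show ?thesis
  proof (cases "snd (snd p) = 0")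
    case True then show ?thesis using cont_v0 p by blast
  next
    case False
    have L: "TB (QQ p) > 0" by (rule TB_QQ_pos[OF p False])
    obtain n where "fst p - TB p < real n * TB (QQ p)"
      using reals_Archimedean3[OF L] by blast
    then have "fst p - TB p \<le> real n * TB (QQ p)" by simp
    then show ?thesis using cont_n[of n, rule_format, OF p False] by blast
  qed
qed

lemma main_cont: "continuous_on RR (\<lambda>(t, x, v). h t x v)"
proof -
  have "continuous_on RR HH" using cont_all by (simp add: continuous_on_eq_continuous_within)
  moreover have "HH = (\<lambda>(t, x, v). h t x v)" by (auto simp: HH_def fun_eq_iff)
  ultimately show ?thesis by simp
qed

end

theorem mainTheorem14:
  fixes \<xi> :: "real^3 \<Rightarrow> real" and gam :: real and q0 :: "real \<Rightarrow> real"
    and h0 :: "real^3 \<Rightarrow> real^3 \<Rightarrow> real"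
    and q h :: "real \<Rightarrow> real^3 \<Rightarrow> real^3 \<Rightarrow> real"
  assumes "smooth3 \<xi>" and "connected (dom \<xi>)" and "bounded (dom \<xi>)"
    and "\<forall>x. \<xi> x = 0 \<longrightarrow> grad \<xi> x \<noteq> 0"
    and "\<exists>c>0. \<forall>x \<zeta>. \<xi> x \<le> 0 \<longrightarrow> dd \<xi> [\<zeta>, \<zeta>] x \<ge> c * (norm \<zeta>)\<^sup>2"
    and "0 \<le> gam" and "gam \<le> 1"
    and "q0 \<in> borel_measurable borel"
    and "\<exists>C. \<forall>\<theta>. 0 \<le> q0 \<theta> \<and> q0 \<theta> \<le> C * \<bar>cos \<theta>\<bar>"
    and "continuous_on ((closure (dom \<xi>) \<times> UNIV) - gamma_zero \<xi>) (\<lambda>(x, v). h0 x v)"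
    and "continuous_on (interior ({0..} \<times> dom \<xi> \<times> UNIV)) (\<lambda>(t, x, v). q t x v)"
    and "\<exists>M. \<forall>t x v. t \<ge> 0 \<longrightarrow> x \<in> dom \<xi> \<longrightarrow> \<bar>q t x v\<bar> \<le> M * nu gam q0 v"
    and "\<forall>(x, v)\<in>gamma_minus \<xi>. h0 x v = h0 x (- v)"
    and "bb_solution \<xi> gam q0 h0 q h"
  shows "continuous_on ({0..} \<times> ((closure (dom \<xi>) \<times> UNIV) - gamma_zero \<xi>)) (\<lambda>(t, x, v). h t x v)"
  proof -
  obtain c where c: "c > 0" "\<forall>x \<zeta>. \<xi> x \<le> 0 \<longrightarrow> dd \<xi> [\<zeta>, \<zeta>] x \<ge> c * (norm \<zeta>)\<^sup>2"
    using assms(5) by blast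
  obtain M where M: "\<forall>t x v. t \<ge> 0 \<longrightarrow> x \<in> dom \<xi> \<longrightarrow> \<bar>q t x v\<bar> \<le> M * nu gam q0 v"
    using assms(12) by blast
  interpret geo \<xi> c
    by standard (use assms(1,3,4) c in auto)
  have nuc: "continuous_on UNIV (nu gam q0)" by (rule nu_cont[OF assms(8,9,6,7)])
  have qc: "isCont (\<lambda>p. q (fst p) (fst (snd p)) (snd (snd p))) (t, x, v)" if "0 < t" "x \<in> dom \<xi>" for t x v
  proof -
    have "interior ({0::real..} \<times> dom \<xi> \<times> (UNIV :: (real^3) set)) = {0<..} \<times> dom \<xi> \<times> UNIV"
      using open_Om by (simp add: interior_Times interior_open interior_real_atLeast)
    then have "(t, x, v) \<in> interior ({0..} \<times> dom \<xi> \<times> UNIV)" using that by simp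
    then have "(t, x, v) \<in> interior (interior ({0..} \<times> dom \<xi> \<times> UNIV))" by (simp only: interior_interior)
    from continuous_on_interior[OF assms(11) this]
    show ?thesis by (simp add: case_prod_unfold)
  qed
  interpret sol \<xi> c q "nu gam q0" M
    by standard (use nuc qc M in auto)
  have bb: "(\<forall>x v. x \<in> closure (dom \<xi>) \<longrightarrow> h 0 x v = h0 x v)"
     "(\<forall>t x v. t > 0 \<longrightarrow> x \<in> frontier (dom \<xi>) \<longrightarrow> h t x v = h t x (- v))"
     "(\<forall>t \<tau> x v. 0 \<le> t \<longrightarrow> 0 \<le> \<tau> \<longrightarrow> (\<forall>s\<in>{0..\<tau>}. x + s *\<^sub>R v \<in> closure (dom \<xi>)) \<longrightarrow>
        h (t + \<tau>) (x + \<tau> *\<^sub>R v) v =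
          exp (- nu gam q0 v * \<tau>) * h t x v
          + integral {0..\<tau>} (\<lambda>s. exp (- nu gam q0 v * (\<tau> - s)) * q (t + s) (x + s *\<^sub>R v) v))"
    using assms(14) unfolding bb_solution_def by blast+
  interpret mainloc \<xi> c q "nu gam q0" M h0 h
  proof standard
    show "continuous_on ((closure (dom \<xi>) \<times> UNIV) - gamma_zero \<xi>) (\<lambda>(x, v). h0 x v)" by (rule assms(10))
    show "\<forall>(x, v)\<in>gamma_minus \<xi>. h0 x v = h0 x (- v)" by (rule assms(13))
    show "\<And>x v. x \<in> closure (dom \<xi>) \<Longrightarrow> h 0 x v = h0 x v" using bb(1) by blast
    show "\<And>t x v. t > 0 \<Longrightarrow> x \<in> frontier (dom \<xi>) \<Longrightarrow> h t x v = h t x (- v)" using bb(2) by blast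
    show "\<And>t \<tau> x v. 0 \<le> t \<Longrightarrow> 0 \<le> \<tau> \<Longrightarrow> (\<forall>s\<in>{0..\<tau>}. x + s *\<^sub>R v \<in> closure (dom \<xi>)) \<Longrightarrow>
        h (t + \<tau>) (x + \<tau> *\<^sub>R v) v = exp (- nu gam q0 v * \<tau>) * h t x v + Iseg t x v \<tau>"
      using bb(3) unfolding Iseg_def by blast
  qed
  show ?thesis using main_cont unfolding RR_def .
qed

end
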